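(* Let $\Gamma$ be a connected $\mathbf{Top}$-graph with more than one vertex, let $T\subseteq\Gamma$ be a maximal tree, and let $v\in\Gamma_0$. Let $\Gamma/T$ be the quotient space of the edge space $\Gamma$ obtained by collapsing the (nonempty) edge set $T$ to a single point, taken as basepoint $\ast$. Then the vertex group $\mathscr F(\Gamma)(v)=\mathscr F(\Gamma)(v,v)$ of the free $\mathbf{Top}$-groupoid is isomorphic, as a topological group, to the free Graev topological group $F_G(\Gamma/T,\ast)$.
   Context: A $\mathbf{Top}$-graph $\Gamma$ consists of a discrete vertex space $\Gamma_0$, an edge space $\Gamma$ and continuous maps $\partial_0,\partial_1:\Gamma\to\Gamma_0$; $\Gamma(x,y)=\partial_0^{-1}(x)\cap\partial_1^{-1}(y)$. Its realization is $|\Gamma|=\Gamma_0\sqcup(\Gamma\times[0,1])/((\alpha,i)\sim\partial_i(\alpha))$; $\Gamma$ is connected if $|\Gamma|$ is path connected. A tree is a $\mathbf{Top}$-graph with discrete edge space and contractible realization; a maximal tree in $\Gamma$ is a sub-$\mathbf{Top}$-graph $T$ which is a tree with $T_0=\Gamma_0$. A $\mathbf{Top}$-groupoid is a groupoid with discrete object set, topologized hom-sets, and continuous composition and inversion. The free $\mathbf{Top}$-groupoid $\mathscr F(\Gamma)$ is the $\mathbf{Top}$-groupoid with objects $\Gamma_0$ and a $\mathbf{Top}$-graph morphism $\sigma:\Gamma\to\mathscr F(\Gamma)$ such that every $\mathbf{Top}$-graph morphism from $\Gamma$ into a $\mathbf{Top}$-groupoid extends uniquely to a functor $\mathscr F(\Gamma)\to\mathcal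 G$ continuous on hom-spaces. The free Graev topological group $F_G(X,\ast)$ is the topological group with continuous $\sigma_\ast:X\to F_G(X,\ast)$, $\sigma_\ast(\ast)=e$, universal for continuous based maps into topological groups. *)

theory Defs
  imports "HOL-Analysis.Analysis" "HOL-Algebra.Group"
begin

definition quotient_topology :: "'a topology \<Rightarrow> ('a \<Rightarrow> 'b) \<Rightarrow> 'b topology" where
  "quotient_topology X f =
     topology (\<lambda>U. U \<subseteq> f ` topspace X \<and> openin X {x \<in> topspace X. f x \<in> U})"

definition sum2_topology :: "'a topology \<Rightarrow> 'b topology \<Rightarrow> ('a + 'b) topology" where
  "sum2_topology X Y =
     topology (\<lambda>U. U \<subseteq> Inl ` topspace X \<union> Inr ` topspace Y
                  \<and> openin X (Inl -` U) \<and> openin Y (Inr -` U))"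

definition topgraph :: "'v set \<Rightarrow> 'e topology \<Rightarrow> ('e \<Rightarrow> 'v) \<Rightarrow> ('e \<Rightarrow> 'v) \<Rightarrow> bool" where
  "topgraph V E d0 d1 \<longleftrightarrow>
     continuous_map E (discrete_topology V) d0 \<and> continuous_map E (discrete_topology V) d1"

definition edges_between :: "'e topology \<Rightarrow> ('e \<Rightarrow> 'v) \<Rightarrow> ('e \<Rightarrow> 'v) \<Rightarrow> 'v \<Rightarrow> 'v \<Rightarrow> 'e set" where
  "edges_between E d0 d1 x y = {\<alpha> \<in> topspace E. d0 \<alpha> = x \<and> d1 \<alpha> = y}"

text \<open>Realization: V + E x [0,1] modulo (alpha,i) ~ d_i alpha.  The map below sends each
  point to a canonical representative of its class.\<close>
definition realization_map :: "('e \<Rightarrow> 'v) \<Rightarrow> ('e \<Rightarrow> 'v) \<Rightarrow> 'v + 'e \<times> real \<Rightarrow> 'v + 'e \<times> real" where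
  "realization_map d0 d1 p =
     (case p of Inl x \<Rightarrow> Inl x
      | Inr (\<alpha>, t) \<Rightarrow> (if t = 0 then Inl (d0 \<alpha>) else if t = 1 then Inl (d1 \<alpha>) else Inr (\<alpha>, t)))"

definition realization :: "'v set \<Rightarrow> 'e topology \<Rightarrow> ('e \<Rightarrow> 'v) \<Rightarrow> ('e \<Rightarrow> 'v) \<Rightarrow> ('v + 'e \<times> real) topology" where
  "realization V E d0 d1 =
     quotient_topology (sum2_topology (discrete_topology V) (prod_topology E (top_of_set {0..1})))
                       (realization_map d0 d1)"

definition connected_topgraph :: "'v set \<Rightarrow> 'e topology \<Rightarrow> ('e \<Rightarrow> 'v) \<Rightarrow> ('e \<Rightarrow> 'v) \<Rightarrow> bool" where
  "connected_topgraph V E d0 d1 \<longleftrightarrow> topgraph V E d0 d1 \<and> path_connected_space (realization V E d0 d1)"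

definition is_tree :: "'v set \<Rightarrow> 'e topology \<Rightarrow> ('e \<Rightarrow> 'v) \<Rightarrow> ('e \<Rightarrow> 'v) \<Rightarrow> bool" where
  "is_tree V E d0 d1 \<longleftrightarrow> topgraph V E d0 d1 \<and> E = discrete_topology (topspace E)
      \<and> contractible_space (realization V E d0 d1)"

definition maximal_tree :: "'v set \<Rightarrow> 'e topology \<Rightarrow> ('e \<Rightarrow> 'v) \<Rightarrow> ('e \<Rightarrow> 'v) \<Rightarrow> 'e set \<Rightarrow> bool" where
  "maximal_tree V E d0 d1 T \<longleftrightarrow> T \<subseteq> topspace E \<and> is_tree V (subtopology E T) d0 d1"

text \<open>The quotient Gamma/T: the edge set T is collapsed to the single point None (the basepoint).\<close>
definition collapse :: "'e set \<Rightarrow> 'e \<Rightarrow> 'e option" where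
  "collapse T \<alpha> = (if \<alpha> \<in> T then None else Some \<alpha>)"

definition graph_quotient :: "'e topology \<Rightarrow> 'e set \<Rightarrow> 'e option topology" where
  "graph_quotient E T = quotient_topology E (collapse T)"

text \<open>comp g f is "g after f": for f in hom x y and g in hom y z it lies in hom x z.\<close>
record ('o, 'm) tgpd =
  obj :: "'o set"
  Hom :: "'o \<Rightarrow> 'o \<Rightarrow> 'm set"
  comp :: "'m \<Rightarrow> 'm \<Rightarrow> 'm"
  ident :: "'o \<Rightarrow> 'm"
  ginv :: "'m \<Rightarrow> 'm"
  homtop :: "'o \<Rightarrow> 'o \<Rightarrow> 'm topology"

definition top_groupoid :: "('o, 'm) tgpd \<Rightarrow> bool" where
  "top_groupoid G \<longleftrightarrow>
    (\<forall>x\<in>obj G. ident G x \<in> Hom G x x) \<and>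
    (\<forall>x\<in>obj G. \<forall>y\<in>obj G. \<forall>z\<in>obj G. \<forall>f\<in>Hom G x y. \<forall>g\<in>Hom G y z. comp G g f \<in> Hom G x z) \<and>
    (\<forall>w\<in>obj G. \<forall>x\<in>obj G. \<forall>y\<in>obj G. \<forall>z\<in>obj G. \<forall>f\<in>Hom G w x. \<forall>g\<in>Hom G x y. \<forall>h\<in>Hom G y z.
        comp G h (comp G g f) = comp G (comp G h g) f) \<and>
    (\<forall>x\<in>obj G. \<forall>y\<in>obj G. \<forall>f\<in>Hom G x y. comp G f (ident G x) = f \<and> comp G (ident G y) f = f) \<and>
    (\<forall>x\<in>obj G. \<forall>y\<in>obj G. \<forall>f\<in>Hom G x y.
        ginv G f \<in> Hom G y x \<and> comp G (ginv G f) f = ident G x \<and> comp G f (ginv G f) = ident G y) \<and>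
    (\<forall>x\<in>obj G. \<forall>y\<in>obj G. \<forall>x'\<in>obj G. \<forall>y'\<in>obj G.
        Hom G x y \<inter> Hom G x' y' \<noteq> {} \<longrightarrow> x = x' \<and> y = y') \<and>
    (\<forall>x\<in>obj G. \<forall>y\<in>obj G. topspace (homtop G x y) = Hom G x y) \<and>
    (\<forall>x\<in>obj G. \<forall>y\<in>obj G. \<forall>z\<in>obj G.
        continuous_map (prod_topology (homtop G x y) (homtop G y z)) (homtop G x z)
                       (\<lambda>(f, g). comp G g f)) \<and>
    (\<forall>x\<in>obj G. \<forall>y\<in>obj G. continuous_map (homtop G x y) (homtop G y x) (ginv G))"

definition graph_morphism ::
  "'v set \<Rightarrow> 'e topology \<Rightarrow> ('e \<Rightarrow> 'v) \<Rightarrow> ('e \<Rightarrow> 'v) \<Rightarrow> ('o, 'm, 'z) tgpd_scheme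
     \<Rightarrow> ('v \<Rightarrow> 'o) \<Rightarrow> ('e \<Rightarrow> 'm) \<Rightarrow> bool" where
  "graph_morphism V E d0 d1 G f0 f \<longleftrightarrow>
     f0 ` V \<subseteq> obj G \<and>
     (\<forall>x\<in>V. \<forall>y\<in>V. continuous_map (subtopology E (edges_between E d0 d1 x y))
                                     (homtop G (f0 x) (f0 y)) f)"

definition cont_functor ::
  "('o, 'm, 'z) tgpd_scheme \<Rightarrow> ('p, 'n, 'y) tgpd_scheme \<Rightarrow> ('o \<Rightarrow> 'p) \<Rightarrow> ('m \<Rightarrow> 'n) \<Rightarrow> bool" where
  "cont_functor G H F0 F \<longleftrightarrow>
     F0 ` obj G \<subseteq> obj H \<and>
     (\<forall>x\<in>obj G. \<forall>y\<in>obj G. continuous_map (homtop G x y) (homtop H (F0 x) (F0 y)) F) \<and>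
     (\<forall>x\<in>obj G. F (ident G x) = ident H (F0 x)) \<and>
     (\<forall>x\<in>obj G. \<forall>y\<in>obj G. \<forall>z\<in>obj G. \<forall>f\<in>Hom G x y. \<forall>g\<in>Hom G y z.
         F (comp G g f) = comp H (F g) (F f))"

text \<open>Free Top-groupoid on Gamma (objects V, generating morphism sigma), universal with respect
  to all Top-groupoids whose objects have type 'w and morphisms type 'n.\<close>
definition free_top_groupoid ::
  "'v set \<Rightarrow> 'e topology \<Rightarrow> ('e \<Rightarrow> 'v) \<Rightarrow> ('e \<Rightarrow> 'v) \<Rightarrow> ('v, 'm) tgpd \<Rightarrow> ('e \<Rightarrow> 'm)
     \<Rightarrow> 'w itself \<Rightarrow> 'n itself \<Rightarrow> bool" where
  "free_top_groupoid V E d0 d1 G \<sigma> _ _ \<longleftrightarrow>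
     top_groupoid G \<and> obj G = V \<and> graph_morphism V E d0 d1 G id \<sigma> \<and>
     (\<forall>(H :: ('w, 'n) tgpd) f0 f. top_groupoid H \<and> graph_morphism V E d0 d1 H f0 f \<longrightarrow>
        (\<exists>F. cont_functor G H f0 F \<and> (\<forall>\<alpha>\<in>topspace E. F (\<sigma> \<alpha>) = f \<alpha>)) \<and>
        (\<forall>F F'. cont_functor G H f0 F \<and> (\<forall>\<alpha>\<in>topspace E. F (\<sigma> \<alpha>) = f \<alpha>) \<and>
                cont_functor G H f0 F' \<and> (\<forall>\<alpha>\<in>topspace E. F' (\<sigma> \<alpha>) = f \<alpha>) \<longrightarrow>
                (\<forall>x\<in>V. \<forall>y\<in>V. \<forall>g\<in>Hom G x y. F g = F' g)))"

definition vertex_group :: "('o, 'm) tgpd \<Rightarrow> 'o \<Rightarrow> 'm monoid" where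
  "vertex_group G v = \<lparr>carrier = Hom G v v, mult = (\<lambda>a b. comp G a b), one = ident G v\<rparr>"

definition topological_group :: "('a, 'z) monoid_scheme \<Rightarrow> 'a topology \<Rightarrow> bool" where
  "topological_group G \<tau> \<longleftrightarrow>
     group G \<and> topspace \<tau> = carrier G \<and>
     continuous_map (prod_topology \<tau> \<tau>) \<tau> (\<lambda>(x, y). x \<otimes>\<^bsub>G\<^esub> y) \<and>
     continuous_map \<tau> \<tau> (\<lambda>x. inv\<^bsub>G\<^esub> x)"

definition top_group_isomorphic ::
  "('a, 'z) monoid_scheme \<Rightarrow> 'a topology \<Rightarrow> ('b, 'y) monoid_scheme \<Rightarrow> 'b topology \<Rightarrow> bool" where
  "top_group_isomorphic G \<tau> H \<tau>' \<longleftrightarrow> (\<exists>\<phi>. \<phi> \<in> iso G H \<and> homeomorphic_map \<tau> \<tau>' \<phi>)"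

text \<open>Free Graev topological group on the based space (X, b), universal with respect to all
  topological groups with elements of type 'h.\<close>
definition graev_free_group ::
  "'x topology \<Rightarrow> 'x \<Rightarrow> 'a monoid \<Rightarrow> 'a topology \<Rightarrow> ('x \<Rightarrow> 'a) \<Rightarrow> 'h itself \<Rightarrow> bool" where
  "graev_free_group X b F \<tau> \<sigma> _ \<longleftrightarrow>
     b \<in> topspace X \<and> topological_group F \<tau> \<and> continuous_map X \<tau> \<sigma> \<and> \<sigma> b = \<one>\<^bsub>F\<^esub> \<and>
     (\<forall>(H :: 'h monoid) \<tau>H f. topological_group H \<tau>H \<and> continuous_map X \<tau>H f \<and> f b = \<one>\<^bsub>H\<^esub> \<longrightarrow>
        (\<exists>\<phi>. \<phi> \<in> hom F H \<and> continuous_map \<tau> \<tau>H \<phi> \<and> (\<forall>x\<in>topspace X. \<phi> (\<sigma> x) = f x)) \<and>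
        (\<forall>\<phi> \<psi>. \<phi> \<in> hom F H \<and> continuous_map \<tau> \<tau>H \<phi> \<and> (\<forall>x\<in>topspace X. \<phi> (\<sigma> x) = f x) \<and>
                \<psi> \<in> hom F H \<and> continuous_map \<tau> \<tau>H \<psi> \<and> (\<forall>x\<in>topspace X. \<psi> (\<sigma> x) = f x) \<longrightarrow>
                (\<forall>g\<in>carrier F. \<phi> g = \<psi> g)))"

end

theory Submission
  imports Defs
begin


lemma istopology_quotient:
  "istopology (\<lambda>U. U \<subseteq> f ` topspace X \<and> openin X {x \<in> topspace X. f x \<in> U})"
proof -
  have 1: "{x \<in> topspace X. f x \<in> S \<and> f x \<in> T} = {x \<in> topspace X. f x \<in> S} \<inter> {x \<in> topspace X. f x \<in> T}" for S T by auto
  have 2: "{x \<in> topspace X. \<exists>U\<in>K. f x \<in> U} = (\<Union>U\<in>K. {x \<in> topspace X. f x \<in> U})" for K by auto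
  show ?thesis unfolding istopology_def
    by (auto simp: 1 2 intro!: openin_Union openin_Int)
qed

lemma openin_quotient_topology:
  "openin (quotient_topology X f) U \<longleftrightarrow> U \<subseteq> f ` topspace X \<and> openin X {x \<in> topspace X. f x \<in> U}"
  unfolding quotient_topology_def by (simp add: topology_inverse'[OF istopology_quotient])

lemma topspace_quotient_topology [simp]: "topspace (quotient_topology X f) = f ` topspace X"
proof -
  have e: "{x \<in> topspace X. f x \<in> f ` topspace X} = topspace X" by auto
  have "openin (quotient_topology X f) (f ` topspace X)"
    by (simp add: openin_quotient_topology e)
  then show ?thesis unfolding topspace_def[of "quotient_topology X f"]
    by (auto simp: openin_quotient_topology)
qed

lemma continuous_map_quotient_topology: "continuous_map X (quotient_topology X f) f"
  unfolding continuous_map_def by (auto simp: openin_quotient_topology)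

lemma continuous_map_from_quotient:
  assumes "continuous_map X Y (g \<circ> f)"
  shows "continuous_map (quotient_topology X f) Y g"
  unfolding continuous_map_def
proof (intro conjI allI impI)
  show "g \<in> topspace (quotient_topology X f) \<rightarrow> topspace Y"
    using assms by (auto simp: continuous_map_def)
  fix U assume U: "openin Y U"
  have eq: "{x \<in> topspace X. f x \<in> {x \<in> topspace (quotient_topology X f). g x \<in> U}} = {x \<in> topspace X. (g\<circ>f) x \<in> U}"
    by auto
  show "openin (quotient_topology X f) {x \<in> topspace (quotient_topology X f). g x \<in> U}"
    unfolding openin_quotient_topology eq using assms U by (auto simp: continuous_map_def)
qed

lemma istopology_sum2:
  "istopology (\<lambda>U. U \<subseteq> Inl ` topspace X \<union> Inr ` topspace Y \<and> openin X (Inl -` U) \<and> openin Y (Inr -` U))"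
  unfolding istopology_def by (auto simp: vimage_Union vimage_Int intro!: openin_Union openin_Int)

lemma openin_sum2_topology:
  "openin (sum2_topology X Y) U \<longleftrightarrow> U \<subseteq> Inl ` topspace X \<union> Inr ` topspace Y \<and> openin X (Inl -` U) \<and> openin Y (Inr -` U)"
  unfolding sum2_topology_def by (simp add: topology_inverse'[OF istopology_sum2])

lemma topspace_sum2_topology [simp]: "topspace (sum2_topology X Y) = Inl ` topspace X \<union> Inr ` topspace Y"
proof -
  have a: "Inl -` (Inl ` topspace X \<union> Inr ` topspace Y) = topspace X" by auto
  have b: "Inr -` (Inl ` topspace X \<union> Inr ` topspace Y) = topspace Y" by auto
  have "openin (sum2_topology X Y) (Inl ` topspace X \<union> Inr ` topspace Y)"
    unfolding openin_sum2_topology a b by auto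
  then have "Inl ` topspace X \<union> Inr ` topspace Y \<subseteq> topspace (sum2_topology X Y)"
    by (rule openin_subset)
  moreover have "topspace (sum2_topology X Y) \<subseteq> Inl ` topspace X \<union> Inr ` topspace Y"
    unfolding topspace_def[of "sum2_topology X Y"] by (auto simp: openin_sum2_topology)
  ultimately show ?thesis by blast
qed

lemma continuous_map_Inr: "continuous_map Y (sum2_topology X Y) Inr"
  unfolding continuous_map_def
proof (intro conjI allI impI)
  fix U assume "openin (sum2_topology X Y) U"
  then have "openin Y (Inr -` U)" by (simp add: openin_sum2_topology)
  moreover have "{x \<in> topspace Y. Inr x \<in> U} = Inr -` U" 
    using \<open>openin (sum2_topology X Y) U\<close> by (auto simp: openin_sum2_topology)
  ultimately show "openin Y {x \<in> topspace Y. Inr x \<in> U}" by simp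
qed auto

lemma continuous_map_from_sum2:
  assumes "continuous_map X Z (h \<circ> Inl)" "continuous_map Y Z (h \<circ> Inr)"
  shows "continuous_map (sum2_topology X Y) Z h"
  unfolding continuous_map_def
proof (intro conjI allI impI)
  show "h \<in> topspace (sum2_topology X Y) \<rightarrow> topspace Z"
    using assms by (auto simp: continuous_map_def)
  fix U assume U: "openin Z U"
  have a: "Inl -` {x \<in> topspace (sum2_topology X Y). h x \<in> U} = {x \<in> topspace X. (h\<circ>Inl) x \<in> U}" by auto
  have b: "Inr -` {x \<in> topspace (sum2_topology X Y). h x \<in> U} = {x \<in> topspace Y. (h\<circ>Inr) x \<in> U}" by auto
  show "openin (sum2_topology X Y) {x \<in> topspace (sum2_topology X Y). h x \<in> U}"
    unfolding openin_sum2_topology a b using assms U by (auto simp: continuous_map_def)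
qed


context
  fixes G :: "('o,'m) tgpd"
  assumes G: "top_groupoid G"
begin

lemmas tg = G[unfolded top_groupoid_def]

lemma gid: "x \<in> obj G \<Longrightarrow> ident G x \<in> Hom G x x"
  using tg[THEN conjunct1] by blast
lemma gcomp: "\<lbrakk>x \<in> obj G; y \<in> obj G; z \<in> obj G; f \<in> Hom G x y; g \<in> Hom G y z\<rbrakk> \<Longrightarrow> comp G g f \<in> Hom G x z"
  using tg[THEN conjunct2, THEN conjunct1] by blast
lemma gassoc: "\<lbrakk>w \<in> obj G; x \<in> obj G; y \<in> obj G; z \<in> obj G; f \<in> Hom G w x; g \<in> Hom G x y; h \<in> Hom G y z\<rbrakk>
   \<Longrightarrow> comp G h (comp G g f) = comp G (comp G h g) f"
  using tg[THEN conjunct2, THEN conjunct2, THEN conjunct1] by blast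
lemma grid: "\<lbrakk>x \<in> obj G; y \<in> obj G; f \<in> Hom G x y\<rbrakk> \<Longrightarrow> comp G f (ident G x) = f"
  using tg[THEN conjunct2, THEN conjunct2, THEN conjunct2, THEN conjunct1] by blast
lemma glid: "\<lbrakk>x \<in> obj G; y \<in> obj G; f \<in> Hom G x y\<rbrakk> \<Longrightarrow> comp G (ident G y) f = f"
  using tg[THEN conjunct2, THEN conjunct2, THEN conjunct2, THEN conjunct1] by blast
lemma ginv_Hom: "\<lbrakk>x \<in> obj G; y \<in> obj G; f \<in> Hom G x y\<rbrakk> \<Longrightarrow> ginv G f \<in> Hom G y x"
  using tg[THEN conjunct2, THEN conjunct2, THEN conjunct2, THEN conjunct2, THEN conjunct1] by blast
lemma ginv_l: "\<lbrakk>x \<in> obj G; y \<in> obj G; f \<in> Hom G x y\<rbrakk> \<Longrightarrow> comp G (ginv G f) f = ident G x"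
  using tg[THEN conjunct2, THEN conjunct2, THEN conjunct2, THEN conjunct2, THEN conjunct1] by blast
lemma ginv_r: "\<lbrakk>x \<in> obj G; y \<in> obj G; f \<in> Hom G x y\<rbrakk> \<Longrightarrow> comp G f (ginv G f) = ident G y"
  using tg[THEN conjunct2, THEN conjunct2, THEN conjunct2, THEN conjunct2, THEN conjunct1] by blast
lemma gdisj: "\<lbrakk>x \<in> obj G; y \<in> obj G; x' \<in> obj G; y' \<in> obj G; f \<in> Hom G x y; f \<in> Hom G x' y'\<rbrakk> \<Longrightarrow> x = x' \<and> y = y'"
  using tg[THEN conjunct2, THEN conjunct2, THEN conjunct2, THEN conjunct2, THEN conjunct2, THEN conjunct1] by blast
lemma gtop: "\<lbrakk>x \<in> obj G; y \<in> obj G\<rbrakk> \<Longrightarrow> topspace (homtop G x y) = Hom G x y"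
  using tg[THEN conjunct2, THEN conjunct2, THEN conjunct2, THEN conjunct2, THEN conjunct2, THEN conjunct2, THEN conjunct1] by blast
lemma gcont: "\<lbrakk>x \<in> obj G; y \<in> obj G; z \<in> obj G\<rbrakk> \<Longrightarrow>
  continuous_map (prod_topology (homtop G x y) (homtop G y z)) (homtop G x z) (\<lambda>(f, g). comp G g f)"
  using tg[THEN conjunct2, THEN conjunct2, THEN conjunct2, THEN conjunct2, THEN conjunct2, THEN conjunct2, THEN conjunct2, THEN conjunct1] by blast
lemma gcont_inv: "\<lbrakk>x \<in> obj G; y \<in> obj G\<rbrakk> \<Longrightarrow> continuous_map (homtop G x y) (homtop G y x) (ginv G)"
  using tg[THEN conjunct2, THEN conjunct2, THEN conjunct2, THEN conjunct2, THEN conjunct2, THEN conjunct2, THEN conjunct2, THEN conjunct2] by blast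

lemma gcont_comp:
  assumes "x \<in> obj G" "y \<in> obj G" "z \<in> obj G"
    "continuous_map Z (homtop G x y) f" "continuous_map Z (homtop G y z) g"
  shows "continuous_map Z (homtop G x z) (\<lambda>t. comp G (g t) (f t))"
proof -
  have "continuous_map Z (prod_topology (homtop G x y) (homtop G y z)) (\<lambda>t. (f t, g t))"
    using assms by (simp add: continuous_map_paired)
  from continuous_map_compose[OF this gcont[OF assms(1-3)]] show ?thesis by (simp add: o_def)
qed

lemma ginv_unique:
  assumes "x \<in> obj G" "y \<in> obj G" "f \<in> Hom G x y" "g \<in> Hom G y x" "comp G g f = ident G x"
  shows "g = ginv G f"
proof -
  have "g = comp G g (comp G f (ginv G f))"
    using assms by (simp add: ginv_r grid)
  also have "\<dots> = comp G (comp G g f) (ginv G f)"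
    using assms by (simp add: gassoc ginv_Hom)
  also have "\<dots> = ginv G f" using assms by (simp add: glid ginv_Hom)
  finally show ?thesis .
qed

lemma ginv_ginv: "\<lbrakk>x \<in> obj G; y \<in> obj G; f \<in> Hom G x y\<rbrakk> \<Longrightarrow> ginv G (ginv G f) = f"
  by (metis ginv_Hom ginv_r ginv_unique)

lemma ginv_comp:
  assumes "x \<in> obj G" "y \<in> obj G" "z \<in> obj G" "f \<in> Hom G x y" "g \<in> Hom G y z"
  shows "ginv G (comp G g f) = comp G (ginv G f) (ginv G g)"
proof -
  have "comp G (comp G (ginv G f) (ginv G g)) (comp G g f) = comp G (ginv G f) (comp G (ginv G g) (comp G g f))"
    using assms by (simp add: gassoc ginv_Hom gcomp)
  also have "comp G (ginv G g) (comp G g f) = f"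
    using assms by (simp add: gassoc ginv_Hom ginv_l glid)
  finally have "comp G (comp G (ginv G f) (ginv G g)) (comp G g f) = ident G x"
    using assms by (simp add: ginv_l)
  then show ?thesis using assms
    by (metis gcomp ginv_Hom ginv_unique)
qed

lemma ginv_id: "x \<in> obj G \<Longrightarrow> ginv G (ident G x) = ident G x"
  by (metis gid ginv_unique glid)

lemma vertex_group_group: assumes "v \<in> obj G" shows "group (vertex_group G v)"
proof (rule groupI)
  show "\<And>x y. x \<in> carrier (vertex_group G v) \<Longrightarrow> y \<in> carrier (vertex_group G v) \<Longrightarrow>
      x \<otimes>\<^bsub>vertex_group G v\<^esub> y \<in> carrier (vertex_group G v)"
    using assms by (simp add: vertex_group_def gcomp)
  show "\<one>\<^bsub>vertex_group G v\<^esub> \<in> carrier (vertex_group G v)" using assms by (simp add: vertex_group_def gid)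
  show "\<And>x y z. x \<in> carrier (vertex_group G v) \<Longrightarrow> y \<in> carrier (vertex_group G v) \<Longrightarrow> z \<in> carrier (vertex_group G v) \<Longrightarrow>
     x \<otimes>\<^bsub>vertex_group G v\<^esub> y \<otimes>\<^bsub>vertex_group G v\<^esub> z = x \<otimes>\<^bsub>vertex_group G v\<^esub> (y \<otimes>\<^bsub>vertex_group G v\<^esub> z)"
    using assms by (simp add: vertex_group_def gassoc)
  show "\<And>x. x \<in> carrier (vertex_group G v) \<Longrightarrow> \<one>\<^bsub>vertex_group G v\<^esub> \<otimes>\<^bsub>vertex_group G v\<^esub> x = x"
    using assms by (simp add: vertex_group_def glid)
  show "\<And>x. x \<in> carrier (vertex_group G v) \<Longrightarrow> \<exists>y\<in>carrier (vertex_group G v). y \<otimes>\<^bsub>vertex_group G v\<^esub> x = \<one>\<^bsub>vertex_group G v\<^esub>"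
    using assms by (auto simp: vertex_group_def intro!: bexI[of _ "ginv G _"] ginv_l ginv_Hom)
qed

lemma vertex_group_inv:
  assumes "v \<in> obj G" "x \<in> Hom G v v" shows "inv\<^bsub>vertex_group G v\<^esub> x = ginv G x"
proof -
  interpret group "vertex_group G v" by (rule vertex_group_group[OF assms(1)])
  show ?thesis
    using assms by (intro inv_equality) (auto simp: vertex_group_def ginv_l ginv_Hom)
qed

lemma vertex_group_topological:
  assumes "v \<in> obj G" shows "topological_group (vertex_group G v) (homtop G v v)"
  unfolding topological_group_def
proof (intro conjI)
  show "group (vertex_group G v)" by (rule vertex_group_group[OF assms])
  show "topspace (homtop G v v) = carrier (vertex_group G v)"
    using assms by (simp add: gtop vertex_group_def)
  have "continuous_map (prod_topology (homtop G v v) (homtop G v v)) (homtop G v v) (\<lambda>p. comp G (fst p) (snd p))"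
    by (rule gcont_comp[OF assms assms assms]) (simp_all add: continuous_map_fst continuous_map_snd)
  then show "continuous_map (prod_topology (homtop G v v) (homtop G v v)) (homtop G v v)
     (\<lambda>(x, y). x \<otimes>\<^bsub>vertex_group G v\<^esub> y)"
    by (simp add: vertex_group_def case_prod_beta')
  show "continuous_map (homtop G v v) (homtop G v v) (\<lambda>x. inv\<^bsub>vertex_group G v\<^esub> x)"
    using gcont_inv[OF assms assms]
    by (rule continuous_map_eq) (simp add: gtop[OF assms assms] vertex_group_inv[OF assms])
qed

end


definition Hg :: "'v set \<Rightarrow> 'f monoid \<Rightarrow> 'f topology \<Rightarrow> ('v, 'v \<times> 'f \<times> 'v) tgpd" where
"Hg V F \<tau> = \<lparr>obj = V, Hom = (\<lambda>x y. {x} \<times> carrier F \<times> {y}),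
  comp = (\<lambda>a b. (fst b, fst (snd a) \<otimes>\<^bsub>F\<^esub> fst (snd b), snd (snd a))),
  ident = (\<lambda>x. (x, \<one>\<^bsub>F\<^esub>, x)), ginv = (\<lambda>a. (snd (snd a), inv\<^bsub>F\<^esub> (fst (snd a)), fst a)),
  homtop = (\<lambda>x y. prod_topology (discrete_topology {x}) (prod_topology \<tau> (discrete_topology {y})))\<rparr>"

lemma Hg_simps [simp]:
  "obj (Hg V F \<tau>) = V" "Hom (Hg V F \<tau>) x y = {x} \<times> carrier F \<times> {y}"
  "comp (Hg V F \<tau>) a b = (fst b, fst (snd a) \<otimes>\<^bsub>F\<^esub> fst (snd b), snd (snd a))"
  "ident (Hg V F \<tau>) x = (x, \<one>\<^bsub>F\<^esub>, x)"
  "ginv (Hg V F \<tau>) a = (snd (snd a), inv\<^bsub>F\<^esub> (fst (snd a)), fst a)"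
  "homtop (Hg V F \<tau>) x y = prod_topology (discrete_topology {x}) (prod_topology \<tau> (discrete_topology {y}))"
  by (simp_all add: Hg_def)

lemma continuous_map_mid:
  "continuous_map (prod_topology (discrete_topology {x}) (prod_topology \<tau> (discrete_topology {y}))) \<tau> (\<lambda>a. fst (snd a))"
  using continuous_map_compose[OF continuous_map_snd continuous_map_fst] by (simp add: o_def)

lemma top_groupoid_Hg:
  assumes TG: "topological_group F \<tau>"
  shows "top_groupoid (Hg V F \<tau>)"
proof -
  interpret group F using TG by (simp add: topological_group_def)
  have tsp: "topspace \<tau> = carrier F" using TG by (simp add: topological_group_def)
  have cm: "continuous_map (prod_topology \<tau> \<tau>) \<tau> (\<lambda>(x, y). x \<otimes>\<^bsub>F\<^esub> y)"
    and ci: "continuous_map \<tau> \<tau> (\<lambda>x. inv\<^bsub>F\<^esub> x)" using TG by (simp_all add: topological_group_def)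
  have contcomp: "continuous_map (prod_topology (homtop (Hg V F \<tau>) x y) (homtop (Hg V F \<tau>) y z))
        (homtop (Hg V F \<tau>) x z) (\<lambda>(f, g). comp (Hg V F \<tau>) g f)" for x y z
  proof -
    let ?X = "prod_topology (homtop (Hg V F \<tau>) x y) (homtop (Hg V F \<tau>) y z)"
    have e: "(\<lambda>(f, g). comp (Hg V F \<tau>) g f) = (\<lambda>p. (fst (fst p), fst (snd (snd p)) \<otimes>\<^bsub>F\<^esub> fst (snd (fst p)), snd (snd (snd p))))"
      by (auto simp: fun_eq_iff)
    have c1: "continuous_map ?X (discrete_topology {x}) (\<lambda>p. fst (fst p))"
      using continuous_map_compose[OF continuous_map_fst continuous_map_fst] by (simp add: o_def)
    have c3: "continuous_map ?X (discrete_topology {z}) (\<lambda>p. snd (snd (snd p)))"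
      using continuous_map_compose[OF continuous_map_compose[OF continuous_map_snd continuous_map_snd] continuous_map_snd]
      by (simp add: o_def)
    have m1: "continuous_map ?X \<tau> (\<lambda>p. fst (snd (snd p)))"
      using continuous_map_compose[OF continuous_map_snd continuous_map_mid] by (simp add: o_def)
    have m2: "continuous_map ?X \<tau> (\<lambda>p. fst (snd (fst p)))"
      using continuous_map_compose[OF continuous_map_fst continuous_map_mid] by (simp add: o_def)
    have "continuous_map ?X (prod_topology \<tau> \<tau>) (\<lambda>p. (fst (snd (snd p)), fst (snd (fst p))))"
      using m1 m2 by (simp add: continuous_map_paired)
    from continuous_map_compose[OF this cm]
    have c2: "continuous_map ?X \<tau> (\<lambda>p. fst (snd (snd p)) \<otimes>\<^bsub>F\<^esub> fst (snd (fst p)))" by (simp add: o_def)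
    show ?thesis unfolding e using c1 c2 c3 by (simp add: continuous_map_paired)
  qed
  have continv: "continuous_map (homtop (Hg V F \<tau>) x y) (homtop (Hg V F \<tau>) y x) (ginv (Hg V F \<tau>))" for x y
  proof -
    let ?X = "homtop (Hg V F \<tau>) x y"
    have c1: "continuous_map ?X (discrete_topology {y}) (\<lambda>p. snd (snd p))"
      using continuous_map_compose[OF continuous_map_snd continuous_map_snd] by (simp add: o_def)
    have c3: "continuous_map ?X (discrete_topology {x}) fst"
      by (simp add: continuous_map_fst)
    have c2: "continuous_map ?X \<tau> (\<lambda>p. inv\<^bsub>F\<^esub> fst (snd p))"
      using continuous_map_compose[OF continuous_map_mid ci] by (simp add: o_def)
    have e: "ginv (Hg V F \<tau>) = (\<lambda>a. (snd (snd a), inv\<^bsub>F\<^esub> (fst (snd a)), fst a))" by (simp add: fun_eq_iff)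
    show ?thesis unfolding e using c1 c2 c3 by (simp add: continuous_map_paired)
  qed
  show ?thesis unfolding top_groupoid_def
  proof (intro conjI)
    show "\<forall>x\<in>obj (Hg V F \<tau>). ident (Hg V F \<tau>) x \<in> Hom (Hg V F \<tau>) x x" by simp
    show "\<forall>x\<in>obj (Hg V F \<tau>). \<forall>y\<in>obj (Hg V F \<tau>). \<forall>z\<in>obj (Hg V F \<tau>).
      \<forall>f\<in>Hom (Hg V F \<tau>) x y. \<forall>g\<in>Hom (Hg V F \<tau>) y z. comp (Hg V F \<tau>) g f \<in> Hom (Hg V F \<tau>) x z"
      by auto
    show "\<forall>w\<in>obj (Hg V F \<tau>). \<forall>x\<in>obj (Hg V F \<tau>). \<forall>y\<in>obj (Hg V F \<tau>). \<forall>z\<in>obj (Hg V F \<tau>).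
       \<forall>f\<in>Hom (Hg V F \<tau>) w x. \<forall>g\<in>Hom (Hg V F \<tau>) x y. \<forall>h\<in>Hom (Hg V F \<tau>) y z.
       comp (Hg V F \<tau>) h (comp (Hg V F \<tau>) g f) = comp (Hg V F \<tau>) (comp (Hg V F \<tau>) h g) f"
      by (auto simp: m_assoc)
    show "\<forall>x\<in>obj (Hg V F \<tau>). \<forall>y\<in>obj (Hg V F \<tau>). \<forall>f\<in>Hom (Hg V F \<tau>) x y.
       comp (Hg V F \<tau>) f (ident (Hg V F \<tau>) x) = f \<and> comp (Hg V F \<tau>) (ident (Hg V F \<tau>) y) f = f"
      by auto
    show "\<forall>x\<in>obj (Hg V F \<tau>). \<forall>y\<in>obj (Hg V F \<tau>). \<forall>f\<in>Hom (Hg V F \<tau>) x y.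
       ginv (Hg V F \<tau>) f \<in> Hom (Hg V F \<tau>) y x \<and>
       comp (Hg V F \<tau>) (ginv (Hg V F \<tau>) f) f = ident (Hg V F \<tau>) x \<and>
       comp (Hg V F \<tau>) f (ginv (Hg V F \<tau>) f) = ident (Hg V F \<tau>) y"
      by auto
    show "\<forall>x\<in>obj (Hg V F \<tau>). \<forall>y\<in>obj (Hg V F \<tau>). \<forall>x'\<in>obj (Hg V F \<tau>). \<forall>y'\<in>obj (Hg V F \<tau>).
       Hom (Hg V F \<tau>) x y \<inter> Hom (Hg V F \<tau>) x' y' \<noteq> {} \<longrightarrow> x = x' \<and> y = y'"
      by auto
    show "\<forall>x\<in>obj (Hg V F \<tau>). \<forall>y\<in>obj (Hg V F \<tau>). topspace (homtop (Hg V F \<tau>) x y) = Hom (Hg V F \<tau>) x y"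
      by (simp add: tsp)
    show "\<forall>x\<in>obj (Hg V F \<tau>). \<forall>y\<in>obj (Hg V F \<tau>). \<forall>z\<in>obj (Hg V F \<tau>).
       continuous_map (prod_topology (homtop (Hg V F \<tau>) x y) (homtop (Hg V F \<tau>) y z)) (homtop (Hg V F \<tau>) x z)
        (\<lambda>(f, g). comp (Hg V F \<tau>) g f)" using contcomp by blast
    show "\<forall>x\<in>obj (Hg V F \<tau>). \<forall>y\<in>obj (Hg V F \<tau>). continuous_map (homtop (Hg V F \<tau>) x y) (homtop (Hg V F \<tau>) y x) (ginv (Hg V F \<tau>))"
      using continv by blast
  qed
qed

lemma cont_functor_ginv:
  assumes G: "top_groupoid G" and H: "top_groupoid H" and F: "cont_functor G H F0 F"
    and x: "x \<in> obj G" and y: "y \<in> obj G" and g: "g \<in> Hom G x y"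
    and FH: "F g \<in> Hom H (F0 x) (F0 y)"
  shows "F (ginv G g) = ginv H (F g)"
proof -
  have o: "F0 x \<in> obj H" "F0 y \<in> obj H" using F x y by (auto simp: cont_functor_def)
  have "comp H (F (ginv G g)) (F g) = F (comp G (ginv G g) g)"
    using F x y g ginv_Hom[OF G x y g] by (simp add: cont_functor_def)
  also have "\<dots> = ident H (F0 x)" using F x y g by (simp add: ginv_l[OF G] cont_functor_def)
  finally have eq: "comp H (F (ginv G g)) (F g) = ident H (F0 x)" .
  have c: "continuous_map (homtop G y x) (homtop H (F0 y) (F0 x)) F"
    using F x y unfolding cont_functor_def by blast
  have "F (ginv G g) \<in> topspace (homtop H (F0 y) (F0 x))"
    using continuous_map_image_subset_topspace[OF c] ginv_Hom[OF G x y g] gtop[OF G y x] by blast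
  then have "F (ginv G g) \<in> Hom H (F0 y) (F0 x)" using gtop[OF H o(2) o(1)] by simp
  then show ?thesis using ginv_unique[OF H o FH _ eq] by simp
qed

lemma cont_functor_Hom:
  assumes G: "top_groupoid G" and H: "top_groupoid H" and F: "cont_functor G H F0 F"
    and x: "x \<in> obj G" and y: "y \<in> obj G" and g: "g \<in> Hom G x y"
  shows "F g \<in> Hom H (F0 x) (F0 y)"
proof -
  have o: "F0 x \<in> obj H" "F0 y \<in> obj H" using F x y by (auto simp: cont_functor_def)
  have c: "continuous_map (homtop G x y) (homtop H (F0 x) (F0 y)) F"
    using F x y unfolding cont_functor_def by blast
  have "F g \<in> topspace (homtop H (F0 x) (F0 y))"
    using continuous_map_image_subset_topspace[OF c] g gtop[OF G x y] by blast
  then show ?thesis using gtop[OF H o] by simp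
qed


context
  fixes V :: "'v set" and T :: "'e set" and d0 d1 :: "'e \<Rightarrow> 'v"
  assumes d0T: "d0 ` T \<subseteq> V" and d1T: "d1 ` T \<subseteq> V"
begin

abbreviation "SS \<equiv> sum2_topology (discrete_topology V) (prod_topology (discrete_topology T) (top_of_set {0..1::real}))"
abbreviation "RR \<equiv> realization V (discrete_topology T) d0 d1"
abbreviation "rm \<equiv> realization_map d0 d1"

lemma RR_eq: "RR = quotient_topology SS rm" by (simp add: realization_def)

lemma Inl_in_RR: "x \<in> V \<Longrightarrow> Inl x \<in> topspace RR"
  unfolding RR_eq by (force simp: realization_map_def)

lemma cont_from_RR:
  assumes "\<And>x. x \<in> V \<Longrightarrow> g (Inl x) \<in> topspace Z"
    and "continuous_map (prod_topology (discrete_topology T) (top_of_set {0..1})) Z (\<lambda>p. g (rm (Inr p)))"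
  shows "continuous_map RR Z g"
  unfolding RR_eq
proof (rule continuous_map_from_quotient, rule continuous_map_from_sum2)
  show "continuous_map (discrete_topology V) Z (g \<circ> rm \<circ> Inl)"
    using assms(1) by (auto simp: realization_map_def)
  show "continuous_map (prod_topology (discrete_topology T) (top_of_set {0..1})) Z (g \<circ> rm \<circ> Inr)"
    using assms(2) by (simp add: o_def)
qed

lemma eps_cont:
  assumes "\<alpha> \<in> T"
  shows "continuous_map (top_of_set {0..1}) RR (\<lambda>s. rm (Inr (\<alpha>, s)))"
proof -
  have "continuous_map (top_of_set {0..1}) (prod_topology (discrete_topology T) (top_of_set {0..1::real})) (\<lambda>s. (\<alpha>, s))"
    using assms by (simp add: continuous_map_paired)
  from continuous_map_compose[OF continuous_map_compose[OF this continuous_map_Inr[of _ "discrete_topology V"]]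
      continuous_map_quotient_topology[of SS rm]]
  show ?thesis unfolding RR_eq by (simp add: o_def)
qed

lemma eps_0: "rm (Inr (\<alpha>, 0)) = Inl (d0 \<alpha>)" and eps_1: "rm (Inr (\<alpha>, 1)) = Inl (d1 \<alpha>)"
  by (simp_all add: realization_map_def)

lemma RR_connected_closure:
  assumes conn: "connected_space RR" and v: "v \<in> P" "v \<in> V"
    and cl: "\<And>\<alpha>. \<alpha> \<in> T \<Longrightarrow> d0 \<alpha> \<in> P \<longleftrightarrow> d1 \<alpha> \<in> P"
  shows "V \<subseteq> P"
proof -
  define c :: "'v + 'e \<times> real \<Rightarrow> bool" where "c = case_sum (\<lambda>x. x \<in> P) (\<lambda>p. d0 (fst p) \<in> P)"
  have cc: "continuous_map RR (discrete_topology UNIV) c"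
  proof (rule cont_from_RR)
    show "g (Inl x) \<in> topspace (discrete_topology UNIV)" if "x \<in> V" for x and g :: "_ \<Rightarrow> bool" by simp
    have "continuous_map (prod_topology (discrete_topology T) (top_of_set {0..1::real})) (discrete_topology UNIV)
        ((\<lambda>a. d0 a \<in> P) \<circ> fst)"
      by (rule continuous_map_compose[OF continuous_map_fst]) simp
    then show "continuous_map (prod_topology (discrete_topology T) (top_of_set {0..1})) (discrete_topology UNIV) (\<lambda>p. c (rm (Inr p)))"
      by (rule continuous_map_eq) (auto simp: c_def realization_map_def cl split: if_splits)
  qed
  define U where "U = {p \<in> topspace RR. c p \<in> {True}}"
  have "openin RR U" unfolding U_def by (rule openin_continuous_map_preimage[OF cc]) simp
  moreover have "closedin RR U" unfolding U_def by (rule closedin_continuous_map_preimage[OF cc]) simp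
  ultimately have "U = {} \<or> U = topspace RR" using conn by (simp add: connected_space_clopen_in)
  moreover have "Inl v \<in> U" using v Inl_in_RR by (simp add: U_def c_def)
  ultimately have "U = topspace RR" by auto
  show ?thesis
  proof
    fix x assume "x \<in> V"
    then have "Inl x \<in> U" using \<open>U = topspace RR\<close> Inl_in_RR by simp
    then show "x \<in> P" by (simp add: U_def c_def)
  qed
qed

end


lemma log_diff:
  fixes f1 f2 :: "'a::topological_space \<Rightarrow> complex"
  assumes S: "connected S" and c1: "continuous_on S f1" and c2: "continuous_on S f2"
    and ex: "\<And>x. x \<in> S \<Longrightarrow> exp (f1 x) = exp (f2 x)" and x: "x \<in> S" and y: "y \<in> S"
  shows "f1 x - f1 y = f2 x - f2 y"
proof -
  define c :: complex where "c = 2 * of_real pi * \<i>"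
  have c0: "c \<noteq> 0" by (simp add: c_def)
  define k where "k z = (f1 z - f2 z) / c" for z
  have kint: "\<exists>n::int. k z = of_int n" if "z \<in> S" for z
  proof -
    from ex[OF that] obtain n :: int where "f1 z = f2 z + (of_int (2 * n) * pi) * \<i>"
      by (auto simp: exp_eq)
    then have "k z = of_int n" by (simp add: k_def c_def field_simps)
    then show ?thesis by blast
  qed
  have kc: "continuous_on S k" unfolding k_def using c0 by (intro continuous_intros c1 c2) auto
  have "k constant_on S"
  proof (rule continuous_discrete_range_constant[OF S kc])
    fix z assume z: "z \<in> S"
    show "\<exists>e>0. \<forall>y. y \<in> S \<and> k y \<noteq> k z \<longrightarrow> e \<le> norm (k y - k z)"
    proof (intro exI[of _ 1] conjI allI impI)
      fix y assume "y \<in> S \<and> k y \<noteq> k z"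
      with kint z obtain m n :: int where "k y = of_int m" "k z = of_int n" "m \<noteq> n" by metis
      then have "k y - k z = of_int (m - n)" by simp
      then have "norm (k y - k z) = of_int \<bar>m - n\<bar>" by (simp only: norm_of_int)
      moreover have "1 \<le> \<bar>m - n\<bar>" using \<open>m \<noteq> n\<close> by linarith
      ultimately show "1 \<le> norm (k y - k z)" by simp
    qed simp
  qed
  then have "k x = k y" using x y by (auto simp: constant_on_def)
  then show ?thesis using c0 by (simp add: k_def divide_cancel_right algebra_simps)
qed

lemma lin_aux: fixes a b c d k m n :: complex
  assumes "a + m = b + n" "k + (d + m) = c + n" shows "a + c = k + (b + d)"
proof -
  have "a = b + n - m" using assms(1) by (simp add: eq_diff_eq)
  moreover have "d = c + n - m - k" using assms(2) by (simp add: algebra_simps eq_diff_eq)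
  ultimately show ?thesis by simp
qed

lemma top_of_set_Times: "top_of_set (A \<times> B) = prod_topology (top_of_set A) (top_of_set B)"
  by (metis subtopology_Times prod_topology_euclidean)

context
  fixes V :: "'v set" and T :: "'e set" and d0 d1 :: "'e \<Rightarrow> 'v"
  assumes d0T: "d0 ` T \<subseteq> V" and d1T: "d1 ` T \<subseteq> V"
begin

lemma tree_potential:
  assumes contr: "contractible_space (realization V (discrete_topology T) d0 d1)" and e: "e \<in> T"
  shows "\<exists>h::'v \<Rightarrow> complex. \<forall>\<alpha>\<in>T. h (d1 \<alpha>) = h (d0 \<alpha>) + (if \<alpha> = e then 1 else 0)"
proof -
  let ?R = "realization V (discrete_topology T) d0 d1"
  let ?rm = "realization_map d0 d1"
  obtain a and Hh :: "real \<times> ('v + 'e \<times> real) \<Rightarrow> 'v + 'e \<times> real"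
    where Hc: "continuous_map (prod_topology (top_of_set {0..1}) ?R) ?R Hh"
      and H0: "\<And>x. Hh (0, x) = x" and H1: "\<And>x. Hh (1, x) = a"
    using contr unfolding contractible_space_def homotopic_with_def id_def by blast
  define w :: "'e \<times> real \<Rightarrow> complex" where
    "w p = exp (2 * of_real pi * \<i> * of_real (if fst p = e then snd p else 0))" for p
  define g :: "'v + 'e \<times> real \<Rightarrow> complex" where "g = case_sum (\<lambda>x. 1) w"
  have gnz: "g p \<noteq> 0" for p by (cases p) (auto simp: g_def w_def)
  have gw: "g (?rm (Inr (\<alpha>, s))) = w (\<alpha>, s)" for \<alpha> s
    by (auto simp: g_def w_def realization_map_def)
  have wc: "continuous_map (prod_topology (discrete_topology T) (top_of_set {0..1})) euclidean w"
  proof -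
    have "continuous_map (prod_topology (discrete_topology T) (top_of_set {0..1::real})) euclideanreal
         ((\<lambda>a. if a = e then 1 else 0::real) \<circ> fst)"
      by (rule continuous_map_compose[OF continuous_map_fst]) simp
    then have i: "continuous_map (prod_topology (discrete_topology T) (top_of_set {0..1::real})) euclideanreal
         (\<lambda>p. (if fst p = e then 1 else 0::real))" by (simp add: o_def)
    have sn: "continuous_map (prod_topology (discrete_topology T) (top_of_set {0..1::real})) euclideanreal snd"
      using continuous_map_snd[of "discrete_topology T" "top_of_set {0..1::real}"]
      by (simp add: continuous_map_in_subtopology)
    have m: "continuous_map (prod_topology (discrete_topology T) (top_of_set {0..1::real})) euclideanreal
         (\<lambda>p. (if fst p = e then 1 else 0) * snd p)"
      by (rule continuous_map_real_mult[OF i sn])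
    have o: "continuous_map euclideanreal euclidean (\<lambda>z. exp (2 * of_real pi * \<i> * of_real z))"
      by (simp, intro continuous_intros)
    from continuous_map_compose[OF m o] show ?thesis
      by (rule continuous_map_eq) (auto simp: w_def)
  qed
  have gc: "continuous_map ?R euclidean g"
  proof (rule cont_from_RR[OF d0T d1T])
    show "continuous_map (prod_topology (discrete_topology T) (top_of_set {0..1})) euclidean (\<lambda>p. g (?rm (Inr p)))"
      using wc by (rule continuous_map_eq) (auto simp: gw)
  qed simp
  define Gm where "Gm = g \<circ> Hh"
  have Gmc: "continuous_map (prod_topology (top_of_set {0..1}) ?R) euclidean Gm"
    unfolding Gm_def by (rule continuous_map_compose[OF Hc gc])
  have Gm0: "Gm (0, p) = g p" and Gm1: "Gm (1, p) = g a" for p by (simp_all add: Gm_def H0 H1)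
  have Gmnz: "Gm q \<noteq> 0" for q by (simp add: Gm_def gnz)
  have vpath: "continuous_on {0..1} (\<lambda>t. Gm (t, Inl x))" if "x \<in> V" for x
  proof -
    have "continuous_map (top_of_set {0..1}) (prod_topology (top_of_set {0..1}) ?R) (\<lambda>t. (t, Inl x))"
      using Inl_in_RR[OF d0T d1T that] by (simp add: continuous_map_paired continuous_map_id[unfolded id_def])
    from continuous_map_compose[OF this Gmc] show ?thesis by (simp add: o_def)
  qed
  have ctr01: "contractible {0..1::real}" by (simp add: convex_imp_contractible)
  have exL: "\<exists>L. continuous_on {0..1} L \<and> (\<forall>t\<in>{0..1}. Gm (t, Inl x) = exp (L t))" if xV: "x \<in> V" for x
  proof -
    have nz: "\<And>t. t \<in> {0..1} \<Longrightarrow> Gm (t, Inl x) \<noteq> 0" by (rule Gmnz)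
    obtain L where "continuous_on {0..1} L" "\<And>t. t \<in> {0..1} \<Longrightarrow> Gm (t, Inl x) = exp (L t)"
      using continuous_logarithm_on_contractible[of "{0..1}" "\<lambda>t. Gm (t, Inl x)", OF vpath[OF xV] ctr01 nz] by blast
    then show ?thesis by blast
  qed
  define L where "L x = (SOME L. continuous_on {0..1} L \<and> (\<forall>t\<in>{0..1}. Gm (t, Inl x) = exp (L t)))" for x
  have L: "continuous_on {0..1} (L x) \<and> (\<forall>t\<in>{0..1}. Gm (t, Inl x) = exp (L x t))" if "x \<in> V" for x
    unfolding L_def by (rule someI_ex[OF exL[OF that]])
  define c :: complex where "c = 2 * of_real pi * \<i>"
  have c0: "c \<noteq> 0" by (simp add: c_def)
  define h where "h x = (L x 0 - L x 1) / c" for x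
  show ?thesis
  proof (intro exI ballI)
    fix \<alpha> assume \<alpha>: "\<alpha> \<in> T"
    have v0: "d0 \<alpha> \<in> V" and v1: "d1 \<alpha> \<in> V" using \<alpha> d0T d1T by auto
    define Q where "Q q = Gm (snd q, ?rm (Inr (\<alpha>, fst q)))" for q :: "real \<times> real"
    have Qc: "continuous_on ({0..1}\<times>{0..1}) Q"
    proof -
      have f1: "continuous_map (top_of_set ({0..1}\<times>{0..1::real})) (top_of_set {0..1::real}) fst"
        unfolding continuous_map_in_subtopology by (auto intro: continuous_intros)
      have f2: "continuous_map (top_of_set ({0..1}\<times>{0..1::real})) (top_of_set {0..1::real}) snd"
        unfolding continuous_map_in_subtopology by (auto intro: continuous_intros)
      have "continuous_map (top_of_set ({0..1}\<times>{0..1::real})) (prod_topology (top_of_set {0..1}) ?R)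
              (\<lambda>q. (snd q, ?rm (Inr (\<alpha>, fst q))))"
        using continuous_map_compose[OF f1 eps_cont[OF d0T d1T \<alpha>]] f2
        unfolding continuous_map_paired by (simp add: o_def)
      from continuous_map_compose[OF this Gmc] show ?thesis
        by (simp add: o_def Q_def)
    qed
    have ctrsq: "contractible ({0..1::real}\<times>{0..1::real})"
      by (intro convex_imp_contractible convex_Times) simp_all
    obtain M where Mc: "continuous_on ({0..1}\<times>{0..1}) M" and M: "\<And>q. q \<in> {0..1}\<times>{0..1} \<Longrightarrow> Q q = exp (M q)"
      using continuous_logarithm_on_contractible[of "{0..1}\<times>{0..1}" Q, OF Qc ctrsq] Gmnz by (metis Q_def)
    have line_s: "continuous_on {0..1} (\<lambda>t. M (s, t))" if "s \<in> {0..1}" for s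
      by (rule continuous_on_compose2[OF Mc, of _ "\<lambda>t. (s, t)"]) (use that in \<open>auto intro!: continuous_intros\<close>)
    have line_t: "continuous_on {0..1} (\<lambda>s. M (s, t))" if "t \<in> {0..1}" for t
      by (rule continuous_on_compose2[OF Mc, of _ "\<lambda>s. (s, t)"]) (use that in \<open>auto intro!: continuous_intros\<close>)
    have conn01: "connected {0..1::real}" by simp
    have s0: "M (0, 0) - M (0, 1) = L (d0 \<alpha>) 0 - L (d0 \<alpha>) 1"
    proof (rule log_diff[OF conn01 line_s _ _ _ _])
      show "continuous_on {0..1} (L (d0 \<alpha>))" using L[OF v0] by simp
      show "exp (M (0, t)) = exp (L (d0 \<alpha>) t)" if "t \<in> {0..1}" for t
        using M[of "(0,t)"] L[OF v0] that by (simp add: Q_def realization_map_def)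
    qed simp_all
    have s1: "M (1, 0) - M (1, 1) = L (d1 \<alpha>) 0 - L (d1 \<alpha>) 1"
    proof (rule log_diff[OF conn01 line_s _ _ _ _])
      show "continuous_on {0..1} (L (d1 \<alpha>))" using L[OF v1] by simp
      show "exp (M (1, t)) = exp (L (d1 \<alpha>) t)" if "t \<in> {0..1}" for t
        using M[of "(1,t)"] L[OF v1] that by (simp add: Q_def realization_map_def)
    qed simp_all
    have t1: "M (1, 1) - M (0, 1) = (\<lambda>s. M (0, 1)) 1 - (\<lambda>s. M (0, 1)) 0"
    proof (rule log_diff[OF conn01 line_t _ _ _ _])
      show "exp (M (s, 1)) = exp (M (0, 1))" if "s \<in> {0..1}" for s
        using M[of "(s,1)"] M[of "(0,1)"] that by (simp add: Q_def Gm1)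
    qed simp_all
    have t0: "M (1, 0) - M (0, 0) = (\<lambda>s. c * of_real (if \<alpha> = e then s else 0)) 1 - (\<lambda>s. c * of_real (if \<alpha> = e then s else 0)) 0"
    proof (rule log_diff[OF conn01 line_t _ _ _ _])
      show "continuous_on {0..1} (\<lambda>s. c * of_real (if \<alpha> = e then s else 0))"
        by (cases "\<alpha> = e") (simp_all add: continuous_intros)
      show "exp (M (s, 0)) = exp (c * of_real (if \<alpha> = e then s else 0))" if "s \<in> {0..1}" for s
        using M[of "(s,0)"] that by (cases "\<alpha> = e") (simp_all add: Q_def Gm0 gw w_def c_def)
    qed simp_all
    show "h (d1 \<alpha>) = h (d0 \<alpha>) + (if \<alpha> = e then 1 else 0)"
    proof (cases "\<alpha> = e")
      case True with s0 s1 t0 t1 c0 show ?thesis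
        apply (simp add: h_def field_simps) by (rule lin_aux)
    next
      case False with s0 s1 t0 t1 c0 show ?thesis
        apply (simp add: h_def field_simps) by (rule lin_aux[where k=0, simplified])
    qed
  qed
qed

end


fun walk :: "'e set \<Rightarrow> ('e \<Rightarrow> 'v) \<Rightarrow> ('e \<Rightarrow> 'v) \<Rightarrow> 'v \<Rightarrow> ('e \<times> bool) list \<Rightarrow> 'v \<Rightarrow> bool" where
  "walk T d0 d1 x [] y = (x = y)"
| "walk T d0 d1 x ((\<alpha>, b) # w) y =
     (\<alpha> \<in> T \<and> (if b then d0 \<alpha> = x \<and> walk T d0 d1 (d1 \<alpha>) w y else d1 \<alpha> = x \<and> walk T d0 d1 (d0 \<alpha>) w y))"

fun wval :: "('v, 'm) tgpd \<Rightarrow> ('e \<Rightarrow> 'm) \<Rightarrow> ('e \<Rightarrow> 'v) \<Rightarrow> ('e \<Rightarrow> 'v) \<Rightarrow> 'v \<Rightarrow> ('e \<times> bool) list \<Rightarrow> 'm" where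
  "wval G \<sigma> d0 d1 x [] = ident G x"
| "wval G \<sigma> d0 d1 x ((\<alpha>, b) # w) =
     (if b then comp G (wval G \<sigma> d0 d1 (d1 \<alpha>) w) (\<sigma> \<alpha>) else comp G (wval G \<sigma> d0 d1 (d0 \<alpha>) w) (ginv G (\<sigma> \<alpha>)))"

definition rw :: "('e \<times> bool) list \<Rightarrow> ('e \<times> bool) list" where
  "rw w = rev (map (\<lambda>(\<alpha>, b). (\<alpha>, \<not> b)) w)"

lemma rw_simps [simp]: "rw [] = []" "rw ((\<alpha>, b) # w) = rw w @ [(\<alpha>, \<not> b)]"
  by (simp_all add: rw_def)

lemma walk_append: "walk T d0 d1 x (u @ w) y \<longleftrightarrow> (\<exists>z. walk T d0 d1 x u z \<and> walk T d0 d1 z w y)"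
proof (induction u arbitrary: x)
  case (Cons p u) then show ?case by (cases p) (auto split: if_splits)
qed simp

lemma walk_rw: "walk T d0 d1 x w y \<Longrightarrow> walk T d0 d1 y (rw w) x"
proof (induction w arbitrary: x)
  case (Cons p u) then show ?case by (cases p) (auto simp: walk_append split: if_splits)
qed simp

context
  fixes G :: "('v,'m) tgpd" and T :: "'e set" and d0 d1 :: "'e \<Rightarrow> 'v" and \<sigma> :: "'e \<Rightarrow> 'm"
  assumes G: "top_groupoid G"
    and ends: "\<And>\<alpha>. \<alpha> \<in> T \<Longrightarrow> d0 \<alpha> \<in> obj G \<and> d1 \<alpha> \<in> obj G"
    and sig: "\<And>\<alpha>. \<alpha> \<in> T \<Longrightarrow> \<sigma> \<alpha> \<in> Hom G (d0 \<alpha>) (d1 \<alpha>)"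
begin

abbreviation "W \<equiv> walk T d0 d1"
abbreviation "wv \<equiv> wval G \<sigma> d0 d1"

lemma walk_obj: "W x w y \<Longrightarrow> x \<in> obj G \<Longrightarrow> y \<in> obj G"
proof (induction w arbitrary: x)
  case (Cons p u) then show ?case by (cases p) (auto simp: ends split: if_splits)
qed simp

lemma wval_Hom: "W x w y \<Longrightarrow> x \<in> obj G \<Longrightarrow> wv x w \<in> Hom G x y"
proof (induction w arbitrary: x)
  case Nil then show ?case by (simp add: gid[OF G])
next
  case (Cons p w)
  obtain \<alpha> b where p: "p = (\<alpha>, b)" by fastforce
  show ?case
  proof (cases b)
    case True
    with Cons p have *: "\<alpha> \<in> T" "d0 \<alpha> = x" "W (d1 \<alpha>) w y" by auto
    then have "wv (d1 \<alpha>) w \<in> Hom G (d1 \<alpha>) y" using Cons ends by auto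
    then show ?thesis using * p True ends[OF *(1)] sig[OF *(1)] walk_obj[OF *(3)]
      by (auto intro: gcomp[OF G])
  next
    case False
    with Cons p have *: "\<alpha> \<in> T" "d1 \<alpha> = x" "W (d0 \<alpha>) w y" by auto
    then have "wv (d0 \<alpha>) w \<in> Hom G (d0 \<alpha>) y" using Cons ends by auto
    then show ?thesis using * p False ends[OF *(1)] ginv_Hom[OF G _ _ sig[OF *(1)]] walk_obj[OF *(3)]
      by (auto intro: gcomp[OF G])
  qed
qed

lemma wval_append:
  assumes "W x u z" "W z w y" "x \<in> obj G"
  shows "wv x (u @ w) = comp G (wv z w) (wv x u)"
  using assms
proof (induction u arbitrary: x)
  case Nil
  then show ?case using grid[OF G _ _ wval_Hom[OF Nil(2)]] walk_obj by simp
next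
  case (Cons p u)
  obtain \<alpha> b where p: "p = (\<alpha>, b)" by fastforce
  show ?case
  proof (cases b)
    case True
    with Cons p have *: "\<alpha> \<in> T" "d0 \<alpha> = x" "W (d1 \<alpha>) u z" by auto
    have o: "d0 \<alpha> \<in> obj G" "d1 \<alpha> \<in> obj G" using ends[OF *(1)] by auto
    have zo: "z \<in> obj G" using walk_obj[OF *(3) o(2)] .
    have yo: "y \<in> obj G" using walk_obj[OF Cons(3) zo] .
    have "wv x (p # u @ w) = comp G (comp G (wv z w) (wv (d1 \<alpha>) u)) (\<sigma> \<alpha>)"
      using Cons.IH[OF *(3) Cons(3) o(2)] p True by simp
    also have "\<dots> = comp G (wv z w) (comp G (wv (d1 \<alpha>) u) (\<sigma> \<alpha>))"
      using gassoc[OF G o(1) o(2) zo yo sig[OF *(1)] wval_Hom[OF *(3) o(2)] wval_Hom[OF Cons(3) zo]] by simp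
    finally show ?thesis using p True by simp
  next
    case False
    with Cons p have *: "\<alpha> \<in> T" "d1 \<alpha> = x" "W (d0 \<alpha>) u z" by auto
    have o: "d0 \<alpha> \<in> obj G" "d1 \<alpha> \<in> obj G" using ends[OF *(1)] by auto
    have zo: "z \<in> obj G" using walk_obj[OF *(3) o(1)] .
    have yo: "y \<in> obj G" using walk_obj[OF Cons(3) zo] .
    have "wv x (p # u @ w) = comp G (comp G (wv z w) (wv (d0 \<alpha>) u)) (ginv G (\<sigma> \<alpha>))"
      using Cons.IH[OF *(3) Cons(3) o(1)] p False by simp
    also have "\<dots> = comp G (wv z w) (comp G (wv (d0 \<alpha>) u) (ginv G (\<sigma> \<alpha>)))"
      using gassoc[OF G o(2) o(1) zo yo ginv_Hom[OF G o sig[OF *(1)]] wval_Hom[OF *(3) o(1)] wval_Hom[OF Cons(3) zo]] by simp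
    finally show ?thesis using p False by simp
  qed
qed

lemma wval_single_T: "\<alpha> \<in> T \<Longrightarrow> wv (d0 \<alpha>) [(\<alpha>, True)] = \<sigma> \<alpha>"
  using glid[OF G _ _ sig] ends by simp

lemma wval_single_F: "\<alpha> \<in> T \<Longrightarrow> wv (d1 \<alpha>) [(\<alpha>, False)] = ginv G (\<sigma> \<alpha>)"
  using glid[OF G _ _ ginv_Hom[OF G _ _ sig]] ends by simp

lemma wval_rw:
  assumes "W x w y" "x \<in> obj G"
  shows "wv y (rw w) = ginv G (wv x w)"
  using assms
proof (induction w arbitrary: x)
  case Nil then show ?case by (simp add: ginv_id[OF G])
next
  case (Cons p u)
  obtain \<alpha> b where p: "p = (\<alpha>, b)" by fastforce
  have yo: "y \<in> obj G" using walk_obj[OF Cons(2,3)] .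
  show ?case
  proof (cases b)
    case True
    with Cons p have *: "\<alpha> \<in> T" "d0 \<alpha> = x" "W (d1 \<alpha>) u y" by auto
    have o: "d0 \<alpha> \<in> obj G" "d1 \<alpha> \<in> obj G" using ends[OF *(1)] by auto
    have "wv y (rw (p # u)) = wv y (rw u @ [(\<alpha>, False)])" using p True by simp
    also have "\<dots> = comp G (wv (d1 \<alpha>) [(\<alpha>, False)]) (wv y (rw u))"
      by (rule wval_append[OF walk_rw[OF *(3)] _ yo]) (use * in simp)
    also have "\<dots> = comp G (ginv G (\<sigma> \<alpha>)) (ginv G (wv (d1 \<alpha>) u))"
      using Cons.IH[OF *(3) o(2)] wval_single_F[OF *(1)] by simp
    also have "\<dots> = ginv G (comp G (wv (d1 \<alpha>) u) (\<sigma> \<alpha>))"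
      using ginv_comp[OF G o(1) o(2) yo sig[OF *(1)] wval_Hom[OF *(3) o(2)]] by simp
    finally show ?thesis using p True by simp
  next
    case False
    with Cons p have *: "\<alpha> \<in> T" "d1 \<alpha> = x" "W (d0 \<alpha>) u y" by auto
    have o: "d0 \<alpha> \<in> obj G" "d1 \<alpha> \<in> obj G" using ends[OF *(1)] by auto
    have "wv y (rw (p # u)) = wv y (rw u @ [(\<alpha>, True)])" using p False by simp
    also have "\<dots> = comp G (wv (d0 \<alpha>) [(\<alpha>, True)]) (wv y (rw u))"
      by (rule wval_append[OF walk_rw[OF *(3)] _ yo]) (use * in simp)
    also have "\<dots> = comp G (\<sigma> \<alpha>) (ginv G (wv (d0 \<alpha>) u))"
      using Cons.IH[OF *(3) o(1)] wval_single_T[OF *(1)] by simp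
    also have "\<dots> = comp G (ginv G (ginv G (\<sigma> \<alpha>))) (ginv G (wv (d0 \<alpha>) u))"
      using ginv_ginv[OF G o(1) o(2) sig[OF *(1)]] by simp
    also have "\<dots> = ginv G (comp G (wv (d0 \<alpha>) u) (ginv G (\<sigma> \<alpha>)))"
      using ginv_comp[OF G o(2) o(1) yo ginv_Hom[OF G o sig[OF *(1)]] wval_Hom[OF *(3) o(1)]] by simp
    finally show ?thesis using p False by simp
  qed
qed


lemma hconst:
  assumes h: "\<forall>\<alpha>\<in>T. h (d1 \<alpha>) = h (d0 \<alpha>) + (if \<alpha> = e then 1 else (0::complex))"
  shows "W a u c \<Longrightarrow> e \<notin> fst ` set u \<Longrightarrow> h c = h a"
proof (induction u arbitrary: a)
  case (Cons p u)
  obtain \<alpha> b where p: "p = (\<alpha>, b)" by fastforce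
  have ne: "\<alpha> \<noteq> e" using Cons.prems p by auto
  show ?case
  proof (cases b)
    case True
    with Cons.prems p have *: "\<alpha> \<in> T" "d0 \<alpha> = a" "W (d1 \<alpha>) u c" by auto
    then show ?thesis using Cons.IH[OF *(3)] Cons.prems p h ne by auto
  next
    case False
    with Cons.prems p have *: "\<alpha> \<in> T" "d1 \<alpha> = a" "W (d0 \<alpha>) u c" by auto
    then show ?thesis using Cons.IH[OF *(3)] Cons.prems p h ne by auto
  qed
qed simp

lemma closed_walk_trivial:
  assumes pot: "\<And>e. e \<in> T \<Longrightarrow> \<exists>h::'v \<Rightarrow> complex. \<forall>\<alpha>\<in>T. h (d1 \<alpha>) = h (d0 \<alpha>) + (if \<alpha> = e then 1 else 0)"
  shows "W x w x \<Longrightarrow> x \<in> obj G \<Longrightarrow> wv x w = ident G x"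
proof (induction "length w" arbitrary: x w rule: less_induct)
  case less
  show ?case
  proof (cases w)
    case Nil then show ?thesis by simp
  next
    case (Cons p w')
    obtain e b where p: "p = (e, b)" by fastforce
    have eT: "e \<in> T" using less.prems Cons p by simp
    have o: "d0 e \<in> obj G" "d1 e \<in> obj G" using ends[OF eT] by auto
    obtain h :: "'v \<Rightarrow> complex" where h: "\<forall>\<alpha>\<in>T. h (d1 \<alpha>) = h (d0 \<alpha>) + (if \<alpha> = e then 1 else 0)" using pot[OF eT] by blast
    have he: "h (d1 e) = h (d0 e) + 1" using h eT by auto
    define nx where "nx = (if b then d1 e else d0 e)"
    have wx': "W nx w' x" and start: "x = (if b then d0 e else d1 e)"
      using less.prems Cons p by (auto simp: nx_def split: if_splits)
    have "e \<in> fst ` set w'"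
    proof (rule ccontr)
      assume "e \<notin> fst ` set w'" then have "h x = h nx" using hconst[OF h wx'] by simp
      then show False using he start by (cases b) (auto simp: nx_def)
    qed
    then have "\<exists>q\<in>set w'. fst q = e" by auto
    then obtain u q r where sp: "w' = u @ q # r" "fst q = e" "\<forall>y\<in>set u. fst y \<noteq> e"
      by (rule split_list_first_propE)
    obtain b' where q: "q = (e, b')" using sp(2) by (cases q) auto
    have "W nx (u @ (e, b') # r) x" using wx' sp(1) q by simp
    then obtain z where wu: "W nx u z" and wr0: "W z ((e, b') # r) x"
      unfolding walk_append by blast
    have hz: "h z = h nx" using hconst[OF h wu] sp(3) by force
    have lu: "length u < length w" and lr: "length r < length w" using Cons sp by auto
    show ?thesis
    proof (cases b)
      case True
      have nxe: "nx = d1 e" using True by (simp add: nx_def)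
      have xe: "x = d0 e" using True start by simp
      have b': "\<not> b'"
      proof
        assume b': b' then have "z = d0 e" using wr0 by simp
        then show False using hz nxe he by simp
      qed
      then have z: "z = d1 e" and wr: "W (d0 e) r x" using wr0 by auto
      have IHu: "wv (d1 e) u = ident G (d1 e)" using less.hyps[OF lu] wu z nxe o by simp
      have IHr: "wv x r = ident G x" using less.hyps[OF lr] wr xe o by simp
      have wF: "W (d1 e) ((e, False) # r) x" using wr eT by simp
      have "wv (d1 e) (u @ (e, False) # r) = comp G (wv (d1 e) ((e, False) # r)) (wv (d1 e) u)"
        using wval_append[OF _ wF o(2)] wu z nxe by simp
      also have "\<dots> = wv (d1 e) ((e, False) # r)"
        using IHu grid[OF G o(2) _ wval_Hom[OF wF o(2)]] walk_obj[OF wF o(2)] by simp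
      also have "\<dots> = ginv G (\<sigma> e)"
        using IHr xe glid[OF G o(2) o(1) ginv_Hom[OF G o sig[OF eT]]] by simp
      finally have "wv x w = comp G (ginv G (\<sigma> e)) (\<sigma> e)"
        using Cons p True sp q b' by simp
      then show ?thesis using ginv_l[OF G o sig[OF eT]] xe by simp
    next
      case False
      have nxe: "nx = d0 e" using False by (simp add: nx_def)
      have xe: "x = d1 e" using False start by simp
      have b': "b'"
      proof (rule ccontr)
        assume b': "\<not> b'" then have "z = d1 e" using wr0 by simp
        then show False using hz nxe he by simp
      qed
      then have z: "z = d0 e" and wr: "W (d1 e) r x" using wr0 by auto
      have IHu: "wv (d0 e) u = ident G (d0 e)" using less.hyps[OF lu] wu z nxe o by simp
      have IHr: "wv x r = ident G x" using less.hyps[OF lr] wr xe o by simp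
      have wF: "W (d0 e) ((e, True) # r) x" using wr eT by simp
      have "wv (d0 e) (u @ (e, True) # r) = comp G (wv (d0 e) ((e, True) # r)) (wv (d0 e) u)"
        using wval_append[OF _ wF o(1)] wu z nxe by simp
      also have "\<dots> = wv (d0 e) ((e, True) # r)"
        using IHu grid[OF G o(1) _ wval_Hom[OF wF o(1)]] walk_obj[OF wF o(1)] by simp
      also have "\<dots> = \<sigma> e"
        using IHr xe glid[OF G o(1) o(2) sig[OF eT]] by simp
      finally have "wv x w = comp G (\<sigma> e) (ginv G (\<sigma> e))"
        using Cons p False sp q b' by simp
      then show ?thesis using ginv_r[OF G o sig[OF eT]] xe by simp
    qed
  qed
qed

lemma walk_val_unique:
  assumes pot: "\<And>e. e \<in> T \<Longrightarrow> \<exists>h::'v \<Rightarrow> complex. \<forall>\<alpha>\<in>T. h (d1 \<alpha>) = h (d0 \<alpha>) + (if \<alpha> = e then 1 else 0)"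
    and w1: "W x w y" and w2: "W x w' y" and xo: "x \<in> obj G"
  shows "wv x w = wv x w'"
proof -
  have yo: "y \<in> obj G" using walk_obj[OF w1 xo] .
  have cl: "W x (w @ rw w') x" unfolding walk_append using w1 walk_rw[OF w2] by blast
  have "wv x (w @ rw w') = comp G (ginv G (wv x w')) (wv x w)"
    using wval_append[OF w1 walk_rw[OF w2] xo] wval_rw[OF w2 xo] by simp
  then have "comp G (ginv G (wv x w')) (wv x w) = ident G x"
    using closed_walk_trivial[OF pot cl xo] by simp
  then have "ginv G (wv x w') = ginv G (wv x w)"
    using ginv_unique[OF G xo yo wval_Hom[OF w1 xo] ginv_Hom[OF G xo yo wval_Hom[OF w2 xo]]] by simp
  then show ?thesis
    using ginv_ginv[OF G xo yo wval_Hom[OF w1 xo]] ginv_ginv[OF G xo yo wval_Hom[OF w2 xo]] by metis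
qed

end


context
  fixes G :: "('o,'m) tgpd"
  assumes G: "top_groupoid G"
begin

lemma cancel_left:
  assumes o: "a \<in> obj G" "v \<in> obj G" "y \<in> obj G" and P: "P \<in> Hom G v y" and X: "X \<in> Hom G a v"
  shows "comp G (ginv G P) (comp G P X) = X"
proof -
  have "comp G (ginv G P) (comp G P X) = comp G (comp G (ginv G P) P) X"
    using gassoc[OF G o(1) o(2) o(3) o(2) X P ginv_Hom[OF G o(2,3) P]] .
  also have "\<dots> = X" using ginv_l[OF G o(2,3) P] glid[OF G o(1,2) X] by simp
  finally show ?thesis .
qed

lemma cancel_right:
  assumes o: "b \<in> obj G" "v \<in> obj G" "y \<in> obj G" and P: "P \<in> Hom G v y" and X: "X \<in> Hom G y b"
  shows "comp G (comp G X P) (ginv G P) = X"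
proof -
  have "comp G (comp G X P) (ginv G P) = comp G X (comp G P (ginv G P))"
    using gassoc[OF G o(3) o(2) o(3) o(1) ginv_Hom[OF G o(2,3) P] P X] by simp
  also have "\<dots> = X" using ginv_r[OF G o(2,3) P] grid[OF G o(3,1) X] by simp
  finally show ?thesis .
qed

lemma conj_mult:
  assumes o: "v \<in> obj G" "x \<in> obj G" "y \<in> obj G" "z \<in> obj G"
    and Px: "Px \<in> Hom G v x" and Py: "Py \<in> Hom G v y" and Pz: "Pz \<in> Hom G v z"
    and A: "A \<in> Hom G v v" and B: "B \<in> Hom G v v"
  shows "comp G (comp G Pz (comp G A (ginv G Py))) (comp G Py (comp G B (ginv G Px)))
       = comp G Pz (comp G (comp G A B) (ginv G Px))"
proof -
  have iPx: "ginv G Px \<in> Hom G x v" and iPy: "ginv G Py \<in> Hom G y v" using ginv_Hom[OF G] o Px Py by auto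
  have X: "comp G B (ginv G Px) \<in> Hom G x v" using gcomp[OF G o(2) o(1) o(1) iPx B] .
  have Y: "comp G Py (comp G B (ginv G Px)) \<in> Hom G x y" using gcomp[OF G o(2) o(1) o(3) X Py] .
  have Ai: "comp G A (ginv G Py) \<in> Hom G y v" using gcomp[OF G o(3) o(1) o(1) iPy A] .
  have "comp G (comp G Pz (comp G A (ginv G Py))) (comp G Py (comp G B (ginv G Px)))
      = comp G Pz (comp G (comp G A (ginv G Py)) (comp G Py (comp G B (ginv G Px))))"
    using gassoc[OF G o(2) o(3) o(1) o(4) Y Ai Pz] by simp
  also have "comp G (comp G A (ginv G Py)) (comp G Py (comp G B (ginv G Px)))
      = comp G A (comp G (ginv G Py) (comp G Py (comp G B (ginv G Px))))"
    using gassoc[OF G o(2) o(3) o(1) o(1) Y iPy A] by simp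
  also have "comp G (ginv G Py) (comp G Py (comp G B (ginv G Px))) = comp G B (ginv G Px)"
    by (rule cancel_left[OF o(2) o(1) o(3) Py X])
  also have "comp G A (comp G B (ginv G Px)) = comp G (comp G A B) (ginv G Px)"
    using gassoc[OF G o(2) o(1) o(1) o(1) iPx B A] .
  finally show ?thesis .
qed

lemma edge_nonT:
  assumes o: "v \<in> obj G" "x \<in> obj G" "y \<in> obj G"
    and P0: "P0 \<in> Hom G v x" and P1: "P1 \<in> Hom G v y" and s: "s \<in> Hom G x y"
  shows "comp G P1 (comp G (comp G (ginv G P1) (comp G s P0)) (ginv G P0)) = s"
proof -
  have sP0: "comp G s P0 \<in> Hom G v y" using gcomp[OF G o(1) o(2) o(3) P0 s] .
  have iP0: "ginv G P0 \<in> Hom G x v" using ginv_Hom[OF G o(1,2) P0] .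
  have "comp G (comp G (ginv G P1) (comp G s P0)) (ginv G P0) = comp G (ginv G P1) (comp G (comp G s P0) (ginv G P0))"
    using gassoc[OF G o(2) o(1) o(3) o(1) iP0 sP0 ginv_Hom[OF G o(1,3) P1]] by simp
  also have "comp G (comp G s P0) (ginv G P0) = s" by (rule cancel_right[OF o(3) o(1) o(2) P0 s])
  finally have "comp G P1 (comp G (comp G (ginv G P1) (comp G s P0)) (ginv G P0)) = comp G P1 (comp G (ginv G P1) s)"
    by simp
  also have "\<dots> = comp G (comp G P1 (ginv G P1)) s"
    using gassoc[OF G o(2) o(3) o(1) o(3) s ginv_Hom[OF G o(1,3) P1] P1] .
  also have "\<dots> = s" using ginv_r[OF G o(1,3) P1] glid[OF G o(2,3) s] by simp
  finally show ?thesis .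
qed

lemma edge_T:
  assumes o: "v \<in> obj G" "x \<in> obj G" "y \<in> obj G"
    and P0: "P0 \<in> Hom G v x" and s: "s \<in> Hom G x y"
  shows "comp G (comp G s P0) (comp G (ident G v) (ginv G P0)) = s"
  using glid[OF G o(2) o(1) ginv_Hom[OF G o(1,2) P0]] cancel_right[OF o(3) o(1) o(2) P0 s] by simp

lemma conj_id:
  assumes o: "v \<in> obj G" and A: "A \<in> Hom G v v"
  shows "comp G (ident G v) (comp G A (ginv G (ident G v))) = A"
  using ginv_id[OF G o] grid[OF G o o A] glid[OF G o o A] gcomp[OF G o o o gid[OF G o] A] by simp

end


lemma continuous_map_collapse: "continuous_map E (graph_quotient E T) (collapse T)"
  unfolding graph_quotient_def by (rule continuous_map_quotient_topology)

lemma topspace_graph_quotient: "topspace (graph_quotient E T) = collapse T ` topspace E"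
  unfolding graph_quotient_def by simp

lemma openin_edges_between:
  assumes "topgraph V E d0 d1" "x \<in> V" "y \<in> V"
  shows "openin E (edges_between E d0 d1 x y)"
proof -
  have c0: "continuous_map E (discrete_topology V) d0" and c1: "continuous_map E (discrete_topology V) d1"
    using assms(1) by (auto simp: topgraph_def)
  have "openin E {a \<in> topspace E. d0 a \<in> {x}}" by (rule openin_continuous_map_preimage[OF c0]) (use assms in auto)
  moreover have "openin E {a \<in> topspace E. d1 a \<in> {y}}" by (rule openin_continuous_map_preimage[OF c1]) (use assms in auto)
  ultimately have "openin E ({a \<in> topspace E. d0 a \<in> {x}} \<inter> {a \<in> topspace E. d1 a \<in> {y}})" by auto
  moreover have "{a \<in> topspace E. d0 a \<in> {x}} \<inter> {a \<in> topspace E. d1 a \<in> {y}} = edges_between E d0 d1 x y"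
    by (auto simp: edges_between_def)
  ultimately show ?thesis by simp
qed

lemma walk_phi_one:
  assumes G: "top_groupoid G" and H: "top_groupoid (Hg V F \<tau>)" and grp: "group F"
    and Fc: "cont_functor G (Hg V F \<tau>) id \<Phi>"
    and ends: "\<And>\<alpha>. \<alpha> \<in> T \<Longrightarrow> d0 \<alpha> \<in> obj G \<and> d1 \<alpha> \<in> obj G"
    and sig: "\<And>\<alpha>. \<alpha> \<in> T \<Longrightarrow> \<sigma> \<alpha> \<in> Hom G (d0 \<alpha>) (d1 \<alpha>)"
    and one: "\<And>\<alpha>. \<alpha> \<in> T \<Longrightarrow> fst (snd (\<Phi> (\<sigma> \<alpha>))) = \<one>\<^bsub>F\<^esub>"
  shows "walk T d0 d1 x w y \<Longrightarrow> x \<in> obj G \<Longrightarrow> fst (snd (\<Phi> (wval G \<sigma> d0 d1 x w))) = \<one>\<^bsub>F\<^esub>"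
proof (induction w arbitrary: x)
  case Nil
  then show ?case using Fc by (simp add: cont_functor_def)
next
  case (Cons p w)
  interpret group F by (rule grp)
  obtain \<alpha> b where p: "p = (\<alpha>, b)" by fastforce
  show ?case
  proof (cases b)
    case True
    with Cons.prems p have *: "\<alpha> \<in> T" "d0 \<alpha> = x" "walk T d0 d1 (d1 \<alpha>) w y" by auto
    have o: "d0 \<alpha> \<in> obj G" "d1 \<alpha> \<in> obj G" using ends[OF *(1)] by auto
    have yo: "y \<in> obj G" using walk_obj[OF G ends sig *(3) o(2)] .
    have "\<Phi> (comp G (wval G \<sigma> d0 d1 (d1 \<alpha>) w) (\<sigma> \<alpha>)) = comp (Hg V F \<tau>) (\<Phi> (wval G \<sigma> d0 d1 (d1 \<alpha>) w)) (\<Phi> (\<sigma> \<alpha>))"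
      using Fc o yo sig[OF *(1)] wval_Hom[OF G ends sig *(3) o(2)] unfolding cont_functor_def by blast
    then show ?thesis using p True Cons.IH[OF *(3) o(2)] one[OF *(1)] by simp
  next
    case False
    with Cons.prems p have *: "\<alpha> \<in> T" "d1 \<alpha> = x" "walk T d0 d1 (d0 \<alpha>) w y" by auto
    have o: "d0 \<alpha> \<in> obj G" "d1 \<alpha> \<in> obj G" using ends[OF *(1)] by auto
    have yo: "y \<in> obj G" using walk_obj[OF G ends sig *(3) o(1)] .
    have "\<Phi> (comp G (wval G \<sigma> d0 d1 (d0 \<alpha>) w) (ginv G (\<sigma> \<alpha>))) = comp (Hg V F \<tau>) (\<Phi> (wval G \<sigma> d0 d1 (d0 \<alpha>) w)) (\<Phi> (ginv G (\<sigma> \<alpha>)))"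
      using Fc o yo ginv_Hom[OF G o sig[OF *(1)]] wval_Hom[OF G ends sig *(3) o(1)] unfolding cont_functor_def by blast
    moreover have "\<Phi> (ginv G (\<sigma> \<alpha>)) = ginv (Hg V F \<tau>) (\<Phi> (\<sigma> \<alpha>))"
      using cont_functor_ginv[OF G H Fc o sig[OF *(1)] cont_functor_Hom[OF G H Fc o sig[OF *(1)]]] .
    ultimately show ?thesis using p False Cons.IH[OF *(3) o(1)] one[OF *(1)] by simp
  qed
qed


theorem theorem3p6:
  fixes V :: "'v set" and E :: "'e topology" and d0 d1 :: "'e \<Rightarrow> 'v"
    and T :: "'e set" and v :: 'v
    and FG :: "('v, 'm) tgpd" and \<sigma> :: "'e \<Rightarrow> 'm"
    and FGr :: "'f monoid" and \<tau> :: "'f topology" and \<sigma>s :: "'e option \<Rightarrow> 'f"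
  assumes "connected_topgraph V E d0 d1"
    and "\<exists>x\<in>V. \<exists>y\<in>V. x \<noteq> y"
    and "maximal_tree V E d0 d1 T"
    and "T \<noteq> {}"
    and "v \<in> V"
    and "free_top_groupoid V E d0 d1 FG \<sigma> TYPE('v) TYPE('m)"
    and "free_top_groupoid V E d0 d1 FG \<sigma> TYPE('v) TYPE('v \<times> 'f \<times> 'v)"
    and "graev_free_group (graph_quotient E T) None FGr \<tau> \<sigma>s TYPE('f)"
    and "graev_free_group (graph_quotient E T) None FGr \<tau> \<sigma>s TYPE('m)"
  shows "top_group_isomorphic (vertex_group FG v) (homtop FG v v) FGr \<tau>"
proof -
  note A = assms
  have tg: "topgraph V E d0 d1" using A(1) by (simp add: connected_topgraph_def)
  have d0E: "\<And>\<alpha>. \<alpha> \<in> topspace E \<Longrightarrow> d0 \<alpha> \<in> V" and d1E: "\<And>\<alpha>. \<alpha> \<in> topspace E \<Longrightarrow> d1 \<alpha> \<in> V"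
    using tg continuous_map_image_subset_topspace[of E "discrete_topology V" d0]
      continuous_map_image_subset_topspace[of E "discrete_topology V" d1]
    by (auto simp: topgraph_def)
  have TE: "T \<subseteq> topspace E" and tree: "is_tree V (subtopology E T) d0 d1"
    using A(3) by (auto simp: maximal_tree_def)
  have ETd: "subtopology E T = discrete_topology T"
    using tree TE by (simp add: is_tree_def Int_absorb1)
  have contr: "contractible_space (realization V (discrete_topology T) d0 d1)"
    using tree ETd by (simp add: is_tree_def)
  have d0T: "d0 ` T \<subseteq> V" and d1T: "d1 ` T \<subseteq> V" using TE d0E d1E by auto
  have v: "v \<in> V" by (rule A(5))
  have FGtg: "top_groupoid FG" and objV: "obj FG = V" and gm\<sigma>: "graph_morphism V E d0 d1 FG id \<sigma>"
    using A(6) by (auto simp: free_top_groupoid_def)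
  have univm: "\<And>(H :: ('v, 'm) tgpd) f0 f. top_groupoid H \<Longrightarrow> graph_morphism V E d0 d1 H f0 f \<Longrightarrow>
        (\<forall>F F'. cont_functor FG H f0 F \<and> (\<forall>\<alpha>\<in>topspace E. F (\<sigma> \<alpha>) = f \<alpha>) \<and>
                cont_functor FG H f0 F' \<and> (\<forall>\<alpha>\<in>topspace E. F' (\<sigma> \<alpha>) = f \<alpha>) \<longrightarrow>
                (\<forall>x\<in>V. \<forall>y\<in>V. \<forall>g\<in>Hom FG x y. F g = F' g))"
    using A(6) unfolding free_top_groupoid_def by blast
  have univH: "\<And>(H :: ('v, 'v \<times> 'f \<times> 'v) tgpd) f0 f. top_groupoid H \<Longrightarrow> graph_morphism V E d0 d1 H f0 f \<Longrightarrow>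
        (\<exists>F. cont_functor FG H f0 F \<and> (\<forall>\<alpha>\<in>topspace E. F (\<sigma> \<alpha>) = f \<alpha>))"
    using A(7) unfolding free_top_groupoid_def by blast
  have TGF: "topological_group FGr \<tau>" and \<sigma>sc: "continuous_map (graph_quotient E T) \<tau> \<sigma>s"
    and \<sigma>s1: "\<sigma>s None = \<one>\<^bsub>FGr\<^esub>"
    using A(8) by (auto simp: graev_free_group_def)
  interpret F: group FGr using TGF by (simp add: topological_group_def)
  have tspF: "topspace \<tau> = carrier FGr" using TGF by (simp add: topological_group_def)
  have univf: "\<And>(H :: 'f monoid) \<tau>H f. topological_group H \<tau>H \<Longrightarrow> continuous_map (graph_quotient E T) \<tau>H f \<Longrightarrow> f None = \<one>\<^bsub>H\<^esub> \<Longrightarrow>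
        (\<forall>\<phi> \<psi>. \<phi> \<in> hom FGr H \<and> continuous_map \<tau> \<tau>H \<phi> \<and> (\<forall>x\<in>topspace (graph_quotient E T). \<phi> (\<sigma>s x) = f x) \<and>
                \<psi> \<in> hom FGr H \<and> continuous_map \<tau> \<tau>H \<psi> \<and> (\<forall>x\<in>topspace (graph_quotient E T). \<psi> (\<sigma>s x) = f x) \<longrightarrow>
                (\<forall>g\<in>carrier FGr. \<phi> g = \<psi> g))"
    using A(8) unfolding graev_free_group_def by blast
  have univg: "\<And>(H :: 'm monoid) \<tau>H f. topological_group H \<tau>H \<Longrightarrow> continuous_map (graph_quotient E T) \<tau>H f \<Longrightarrow> f None = \<one>\<^bsub>H\<^esub> \<Longrightarrow>
        (\<exists>\<phi>. \<phi> \<in> hom FGr H \<and> continuous_map \<tau> \<tau>H \<phi> \<and> (\<forall>x\<in>topspace (graph_quotient E T). \<phi> (\<sigma>s x) = f x))"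
    using A(9) unfolding graev_free_group_def by blast
  have \<sigma>cont: "continuous_map (subtopology E (edges_between E d0 d1 x y)) (homtop FG x y) \<sigma>" if "x \<in> V" "y \<in> V" for x y
    using gm\<sigma> that by (simp add: graph_morphism_def)
  have \<sigma>Hom: "\<sigma> \<alpha> \<in> Hom FG (d0 \<alpha>) (d1 \<alpha>)" if "\<alpha> \<in> topspace E" for \<alpha>
  proof -
    have "\<alpha> \<in> topspace (subtopology E (edges_between E d0 d1 (d0 \<alpha>) (d1 \<alpha>)))"
      using that by (simp add: edges_between_def)
    then have "\<sigma> \<alpha> \<in> topspace (homtop FG (d0 \<alpha>) (d1 \<alpha>))"
      using continuous_map_image_subset_topspace[OF \<sigma>cont[OF d0E[OF that] d1E[OF that]]] by blast
    then show ?thesis using gtop[OF FGtg] d0E[OF that] d1E[OF that] objV by simp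
  qed
  have ends: "\<And>\<alpha>. \<alpha> \<in> T \<Longrightarrow> d0 \<alpha> \<in> obj FG \<and> d1 \<alpha> \<in> obj FG" using d0T d1T objV by auto
  have sigT: "\<And>\<alpha>. \<alpha> \<in> T \<Longrightarrow> \<sigma> \<alpha> \<in> Hom FG (d0 \<alpha>) (d1 \<alpha>)" using \<sigma>Hom TE by auto
  have pot: "\<And>e. e \<in> T \<Longrightarrow> \<exists>h::'v \<Rightarrow> complex. \<forall>\<alpha>\<in>T. h (d1 \<alpha>) = h (d0 \<alpha>) + (if \<alpha> = e then 1 else 0)"
    using tree_potential[OF d0T d1T contr] by blast
  have reach: "\<forall>x\<in>V. \<exists>w. walk T d0 d1 v w x"
  proof -
    have "V \<subseteq> {x. \<exists>w. walk T d0 d1 v w x}"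
    proof (rule RR_connected_closure[OF d0T d1T])
      show "connected_space (realization V (discrete_topology T) d0 d1)"
        using contr by (rule contractible_imp_connected_space)
      have "walk T d0 d1 v [] v" by simp
      then show "v \<in> {x. \<exists>w. walk T d0 d1 v w x}" by blast
      show "d0 \<alpha> \<in> {x. \<exists>w. walk T d0 d1 v w x} \<longleftrightarrow> d1 \<alpha> \<in> {x. \<exists>w. walk T d0 d1 v w x}" if "\<alpha> \<in> T" for \<alpha>
      proof
        assume "d0 \<alpha> \<in> {x. \<exists>w. walk T d0 d1 v w x}"
        then obtain w where "walk T d0 d1 v w (d0 \<alpha>)" by blast
        then have "walk T d0 d1 v (w @ [(\<alpha>, True)]) (d1 \<alpha>)" using that unfolding walk_append by simp
        then show "d1 \<alpha> \<in> {x. \<exists>w. walk T d0 d1 v w x}" by blast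
      next
        assume "d1 \<alpha> \<in> {x. \<exists>w. walk T d0 d1 v w x}"
        then obtain w where "walk T d0 d1 v w (d1 \<alpha>)" by blast
        then have "walk T d0 d1 v (w @ [(\<alpha>, False)]) (d0 \<alpha>)" using that unfolding walk_append by simp
        then show "d0 \<alpha> \<in> {x. \<exists>w. walk T d0 d1 v w x}" by blast
      qed
    qed (use v in simp)
    then show ?thesis by blast
  qed
  define wl where "wl x = (SOME w. walk T d0 d1 v w x)" for x
  have wl: "walk T d0 d1 v (wl x) x" if "x \<in> V" for x
    unfolding wl_def using reach that by (metis someI_ex)
  define pth where "pth x = wval FG \<sigma> d0 d1 v (wl x)" for x
  have vo: "v \<in> obj FG" using v objV by simp
  have pthHom: "pth x \<in> Hom FG v x" if "x \<in> V" for x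
    unfolding pth_def using wval_Hom[OF FGtg ends sigT wl[OF that] vo] .
  have pth_uniq: "pth x = wval FG \<sigma> d0 d1 v w" if "walk T d0 d1 v w x" "x \<in> V" for x w
    unfolding pth_def using walk_val_unique[OF FGtg ends sigT pot wl[OF that(2)] that(1) vo] .
  have pthv: "pth v = ident FG v" using pth_uniq[of "[]" v] v by simp
  have pthT: "pth (d1 \<alpha>) = comp FG (\<sigma> \<alpha>) (pth (d0 \<alpha>))" if "\<alpha> \<in> T" for \<alpha>
  proof -
    have o: "d0 \<alpha> \<in> V" "d1 \<alpha> \<in> V" using that d0T d1T by auto
    have w1: "walk T d0 d1 v (wl (d0 \<alpha>) @ [(\<alpha>, True)]) (d1 \<alpha>)"
      using wl[OF o(1)] that by (auto simp: walk_append)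
    have "pth (d1 \<alpha>) = wval FG \<sigma> d0 d1 v (wl (d0 \<alpha>) @ [(\<alpha>, True)])" by (rule pth_uniq[OF w1 o(2)])
    also have "\<dots> = comp FG (wval FG \<sigma> d0 d1 (d0 \<alpha>) [(\<alpha>, True)]) (pth (d0 \<alpha>))"
    proof -
      have "walk T d0 d1 (d0 \<alpha>) [(\<alpha>, True)] (d1 \<alpha>)" using that by simp
      from wval_append[OF FGtg ends sigT wl[OF o(1)] this vo] show ?thesis unfolding pth_def .
    qed
    also have "\<dots> = comp FG (\<sigma> \<alpha>) (pth (d0 \<alpha>))" using glid[OF FGtg _ _ sigT[OF that]] ends[OF that] by simp
    finally show ?thesis .
  qed

  define H where "H = Hg V FGr \<tau>"
  have Htg: "top_groupoid H" unfolding H_def by (rule top_groupoid_Hg[OF TGF])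
  define fH where "fH \<alpha> = (d0 \<alpha>, \<sigma>s (collapse T \<alpha>), d1 \<alpha>)" for \<alpha>
  have sc: "continuous_map E \<tau> (\<lambda>\<alpha>. \<sigma>s (collapse T \<alpha>))"
    using continuous_map_compose[OF continuous_map_collapse \<sigma>sc] by (simp add: o_def)
  have gmH: "graph_morphism V E d0 d1 H id fH"
    unfolding graph_morphism_def
  proof (intro conjI ballI)
    show "id ` V \<subseteq> obj H" by (simp add: H_def)
    fix x y assume xy: "x \<in> V" "y \<in> V"
    let ?S = "subtopology E (edges_between E d0 d1 x y)"
    have c1: "continuous_map ?S (discrete_topology {x}) d0"
      by (rule continuous_map_eq[of _ _ "\<lambda>_. x"]) (auto simp: edges_between_def)
    have c3: "continuous_map ?S (discrete_topology {y}) d1"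
      by (rule continuous_map_eq[of _ _ "\<lambda>_. y"]) (auto simp: edges_between_def)
    have c2: "continuous_map ?S \<tau> (\<lambda>\<alpha>. \<sigma>s (collapse T \<alpha>))"
      by (rule continuous_map_from_subtopology[OF sc])
    show "continuous_map ?S (homtop H (id x) (id y)) fH"
      unfolding fH_def H_def using c1 c2 c3 by (simp add: continuous_map_paired)
  qed
  obtain \<Phi> where \<Phi>f: "cont_functor FG H id \<Phi>" and \<Phi>\<sigma>: "\<And>\<alpha>. \<alpha> \<in> topspace E \<Longrightarrow> \<Phi> (\<sigma> \<alpha>) = fH \<alpha>"
    using univH[OF Htg gmH] by blast
  have \<Phi>f': "cont_functor FG (Hg V FGr \<tau>) id \<Phi>" using \<Phi>f by (simp add: H_def)
  have HtgV: "top_groupoid (Hg V FGr \<tau>)" using Htg by (simp add: H_def)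
  define \<phi> where "\<phi> g = fst (snd (\<Phi> g))" for g
  have \<Phi>Hom: "\<Phi> g \<in> {x} \<times> carrier FGr \<times> {y}" if "x \<in> V" "y \<in> V" "g \<in> Hom FG x y" for x y g
    using cont_functor_Hom[OF FGtg HtgV \<Phi>f'] that objV by simp
  have \<phi>car: "\<phi> g \<in> carrier FGr" if "x \<in> V" "y \<in> V" "g \<in> Hom FG x y" for x y g
    using \<Phi>Hom[OF that] by (auto simp: \<phi>_def)
  have \<phi>comp: "\<phi> (comp FG g f) = \<phi> g \<otimes>\<^bsub>FGr\<^esub> \<phi> f"
    if "x \<in> V" "y \<in> V" "z \<in> V" "f \<in> Hom FG x y" "g \<in> Hom FG y z" for x y z f g
  proof -
    have "\<Phi> (comp FG g f) = comp H (\<Phi> g) (\<Phi> f)" using \<Phi>f that objV unfolding cont_functor_def by blast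
    then show ?thesis by (simp add: \<phi>_def H_def)
  qed
  have \<phi>id: "\<phi> (ident FG x) = \<one>\<^bsub>FGr\<^esub>" if "x \<in> V" for x
    using \<Phi>f that objV by (simp add: cont_functor_def \<phi>_def H_def)
  have \<phi>inv: "\<phi> (ginv FG g) = inv\<^bsub>FGr\<^esub> (\<phi> g)" if "x \<in> V" "y \<in> V" "g \<in> Hom FG x y" for x y g
  proof -
    have "\<Phi> (ginv FG g) = ginv (Hg V FGr \<tau>) (\<Phi> g)"
      using cont_functor_ginv[OF FGtg HtgV \<Phi>f' _ _ that(3) cont_functor_Hom[OF FGtg HtgV \<Phi>f' _ _ that(3)]] that objV by simp
    then show ?thesis by (simp add: \<phi>_def)
  qed
  have \<phi>\<sigma>: "\<phi> (\<sigma> \<alpha>) = \<sigma>s (collapse T \<alpha>)" if "\<alpha> \<in> topspace E" for \<alpha>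
    using \<Phi>\<sigma>[OF that] by (simp add: \<phi>_def fH_def)
  have \<phi>cont: "continuous_map (homtop FG x y) \<tau> \<phi>" if "x \<in> V" "y \<in> V" for x y
  proof -
    have "continuous_map (homtop FG x y) (homtop H x y) \<Phi>" using \<Phi>f that objV by (simp add: cont_functor_def)
    from continuous_map_compose[OF this[unfolded H_def Hg_simps] continuous_map_mid]
    show ?thesis unfolding \<phi>_def[abs_def] by (simp add: o_def)
  qed
  have \<phi>pth: "\<phi> (pth x) = \<one>\<^bsub>FGr\<^esub>" if "x \<in> V" for x
  proof -
    have one: "fst (snd (\<Phi> (\<sigma> \<alpha>))) = \<one>\<^bsub>FGr\<^esub>" if "\<alpha> \<in> T" for \<alpha>
      using \<phi>\<sigma>[of \<alpha>] that TE \<sigma>s1 by (auto simp: \<phi>_def collapse_def)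
    show ?thesis unfolding pth_def \<phi>_def
      by (rule walk_phi_one[OF FGtg HtgV F.is_group \<Phi>f' ends sigT one wl[OF that] vo])
  qed

  define qq where "qq \<alpha> = comp FG (ginv FG (pth (d1 \<alpha>))) (comp FG (\<sigma> \<alpha>) (pth (d0 \<alpha>)))" for \<alpha>
  define q where "q z = (case z of None \<Rightarrow> ident FG v | Some \<alpha> \<Rightarrow> qq \<alpha>)" for z
  have qqT: "qq \<alpha> = ident FG v" if "\<alpha> \<in> T" for \<alpha>
  proof -
    have o: "d0 \<alpha> \<in> V" "d1 \<alpha> \<in> V" using that d0T d1T by auto
    show ?thesis unfolding qq_def pthT[OF that, symmetric]
      using ginv_l[OF FGtg vo _ pthHom[OF o(2)]] o objV by simp
  qed
  have qcoll: "q (collapse T \<alpha>) = qq \<alpha>" for \<alpha>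
    by (simp add: q_def collapse_def qqT)
  have qqHom: "qq \<alpha> \<in> Hom FG v v" if "\<alpha> \<in> topspace E" for \<alpha>
  proof -
    have o: "d0 \<alpha> \<in> obj FG" "d1 \<alpha> \<in> obj FG" using that d0E d1E objV by auto
    show ?thesis unfolding qq_def
      by (rule gcomp[OF FGtg vo o(2) vo gcomp[OF FGtg vo o(1) o(2) pthHom \<sigma>Hom[OF that]] ginv_Hom[OF FGtg vo o(2) pthHom]])
        (use that d0E d1E in auto)
  qed
  have qqcont: "continuous_map E (homtop FG v v) qq"
  proof (rule pasting_lemma[of "V \<times> V" E "\<lambda>(x, y). edges_between E d0 d1 x y" "homtop FG v v" "\<lambda>_. qq"])
    show "openin E ((\<lambda>(x, y). edges_between E d0 d1 x y) i)" if "i \<in> V \<times> V" for i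
      using openin_edges_between[OF tg] that by auto
    show "\<exists>j. j \<in> V \<times> V \<and> x \<in> (\<lambda>(x, y). edges_between E d0 d1 x y) j \<and> qq x = qq x" if "x \<in> topspace E" for x
      using that d0E d1E by (intro exI[of _ "(d0 x, d1 x)"]) (auto simp: edges_between_def)
    show "continuous_map (subtopology E ((\<lambda>(x, y). edges_between E d0 d1 x y) i)) (homtop FG v v) qq"
      if iV: "i \<in> V \<times> V" for i
    proof -
      obtain x y where i: "i = (x, y)" "x \<in> V" "y \<in> V" using iV by auto
      have o: "x \<in> obj FG" "y \<in> obj FG" using i objV by auto
      let ?S = "subtopology E (edges_between E d0 d1 x y)"
      have cx: "continuous_map ?S (homtop FG v x) (\<lambda>_. pth x)"
        using pthHom[OF i(2)] gtop[OF FGtg vo o(1)] by simp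
      have cy: "continuous_map ?S (homtop FG y v) (\<lambda>_. ginv FG (pth y))"
        using ginv_Hom[OF FGtg vo o(2) pthHom[OF i(3)]] gtop[OF FGtg o(2) vo] by simp
      have c1: "continuous_map ?S (homtop FG v y) (\<lambda>\<alpha>. comp FG (\<sigma> \<alpha>) (pth x))"
        by (rule gcont_comp[OF FGtg vo o(1) o(2) cx \<sigma>cont[OF i(2,3)]])
      have c2: "continuous_map ?S (homtop FG v v) (\<lambda>\<alpha>. comp FG (ginv FG (pth y)) (comp FG (\<sigma> \<alpha>) (pth x)))"
        by (rule gcont_comp[OF FGtg vo o(2) vo c1 cy])
      show ?thesis using c2 i(1)
        by (auto intro: continuous_map_eq simp: qq_def edges_between_def)
    qed
  qed auto
  have qcont: "continuous_map (graph_quotient E T) (homtop FG v v) q"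
    unfolding graph_quotient_def
    by (rule continuous_map_from_quotient) (use qqcont in \<open>simp add: o_def qcoll\<close>)
  have VGtop: "topological_group (vertex_group FG v) (homtop FG v v)"
    using vertex_group_topological[OF FGtg vo] .
  interpret VG: group "vertex_group FG v" using vertex_group_group[OF FGtg vo] .
  have qNone: "q None = \<one>\<^bsub>vertex_group FG v\<^esub>" by (simp add: q_def vertex_group_def)
  obtain \<Psi> where \<Psi>hom: "\<Psi> \<in> hom FGr (vertex_group FG v)" and \<Psi>c: "continuous_map \<tau> (homtop FG v v) \<Psi>"
    and \<Psi>\<sigma>: "\<And>z. z \<in> topspace (graph_quotient E T) \<Longrightarrow> \<Psi> (\<sigma>s z) = q z"
    using univg[OF VGtop qcont qNone] by blast
  have \<Psi>car: "\<Psi> g \<in> Hom FG v v" if "g \<in> carrier FGr" for g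
    using hom_in_carrier[OF \<Psi>hom that] by (simp add: vertex_group_def)
  have \<Psi>one: "\<Psi> \<one>\<^bsub>FGr\<^esub> = ident FG v"
    using hom_one[OF \<Psi>hom F.is_group VG.is_group] by (simp add: vertex_group_def)
  have \<Psi>mult: "\<Psi> (a \<otimes>\<^bsub>FGr\<^esub> b) = comp FG (\<Psi> a) (\<Psi> b)" if "a \<in> carrier FGr" "b \<in> carrier FGr" for a b
    using hom_mult[OF \<Psi>hom that] by (simp add: vertex_group_def)

  have pth0: "pth x \<in> Hom FG v x" and xo: "x \<in> obj FG" if "x \<in> V" for x
    using pthHom that objV by auto
  have \<sigma>scar: "\<sigma>s z \<in> carrier FGr" if "z \<in> topspace (graph_quotient E T)" for z
    using continuous_map_image_subset_topspace[OF \<sigma>sc] that tspF by auto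
  have \<phi>\<Psi>: "\<forall>g\<in>carrier FGr. \<phi> (\<Psi> g) = g"
  proof -
    have "\<forall>g\<in>carrier FGr. (\<lambda>g. \<phi> (\<Psi> g)) g = (\<lambda>g. g) g"
    proof (rule univf[OF TGF \<sigma>sc \<sigma>s1, THEN spec[where x="\<lambda>g. \<phi> (\<Psi> g)"], THEN spec[where x="\<lambda>g. g"], THEN mp], intro conjI)
      show "(\<lambda>g. \<phi> (\<Psi> g)) \<in> hom FGr FGr"
      proof (rule homI)
        show "\<phi> (\<Psi> x) \<in> carrier FGr" if "x \<in> carrier FGr" for x
          using \<phi>car[OF v v \<Psi>car[OF that]] .
        show "\<phi> (\<Psi> (x \<otimes>\<^bsub>FGr\<^esub> y)) = \<phi> (\<Psi> x) \<otimes>\<^bsub>FGr\<^esub> \<phi> (\<Psi> y)" if "x \<in> carrier FGr" "y \<in> carrier FGr" for x y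
          using \<Psi>mult[OF that] \<phi>comp[OF v v v \<Psi>car[OF that(2)] \<Psi>car[OF that(1)]] by simp
      qed
      show "continuous_map \<tau> \<tau> (\<lambda>g. \<phi> (\<Psi> g))"
        using continuous_map_compose[OF \<Psi>c \<phi>cont[OF v v]] by (simp add: o_def)
      show "\<forall>x\<in>topspace (graph_quotient E T). \<phi> (\<Psi> (\<sigma>s x)) = \<sigma>s x"
      proof
        fix z assume z: "z \<in> topspace (graph_quotient E T)"
        then obtain \<alpha> where \<alpha>: "\<alpha> \<in> topspace E" "z = collapse T \<alpha>" by (auto simp: topspace_graph_quotient)
        have o: "d0 \<alpha> \<in> V" "d1 \<alpha> \<in> V" using \<alpha> d0E d1E by auto
        have "\<phi> (\<Psi> (\<sigma>s z)) = \<phi> (qq \<alpha>)" using \<Psi>\<sigma>[OF z] \<alpha> qcoll by simp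
        also have "\<dots> = inv\<^bsub>FGr\<^esub> (\<phi> (pth (d1 \<alpha>))) \<otimes>\<^bsub>FGr\<^esub> (\<phi> (\<sigma> \<alpha>) \<otimes>\<^bsub>FGr\<^esub> \<phi> (pth (d0 \<alpha>)))"
          unfolding qq_def
          using \<phi>comp[OF v o(2) v gcomp[OF FGtg vo xo[OF o(1)] xo[OF o(2)] pth0[OF o(1)] \<sigma>Hom[OF \<alpha>(1)]] ginv_Hom[OF FGtg vo xo[OF o(2)] pth0[OF o(2)]]]
            \<phi>comp[OF v o(1) o(2) pth0[OF o(1)] \<sigma>Hom[OF \<alpha>(1)]] \<phi>inv[OF v o(2) pth0[OF o(2)]] by simp
        also have "\<dots> = \<sigma>s z" using \<phi>pth[OF o(1)] \<phi>pth[OF o(2)] \<phi>\<sigma>[OF \<alpha>(1)] \<alpha>(2) \<sigma>scar[OF z] by simp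
        finally show "\<phi> (\<Psi> (\<sigma>s z)) = \<sigma>s z" .
      qed
      show "(\<lambda>g. g) \<in> hom FGr FGr" by (rule homI) auto
      show "continuous_map \<tau> \<tau> (\<lambda>g. g)" by (simp add: continuous_map_id[unfolded id_def])
      show "\<forall>x\<in>topspace (graph_quotient E T). \<sigma>s x = \<sigma>s x" by simp
    qed
    then show ?thesis by simp
  qed

  define K where "K g = comp FG (pth (snd (snd (\<Phi> g)))) (comp FG (\<Psi> (\<phi> g)) (ginv FG (pth (fst (\<Phi> g)))))" for g
  have Keq: "K g = comp FG (pth y) (comp FG (\<Psi> (\<phi> g)) (ginv FG (pth x)))"
    if "x \<in> V" "y \<in> V" "g \<in> Hom FG x y" for x y g
    using \<Phi>Hom[OF that] by (auto simp: K_def)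
  have \<Psi>\<phi>Hom: "\<Psi> (\<phi> g) \<in> Hom FG v v" if "x \<in> V" "y \<in> V" "g \<in> Hom FG x y" for x y g
    using \<Psi>car[OF \<phi>car[OF that]] .
  have Kfun: "cont_functor FG FG id K"
    unfolding cont_functor_def
  proof (intro conjI ballI)
    show "id ` obj FG \<subseteq> obj FG" by simp
    fix x y assume x: "x \<in> obj FG" and y: "y \<in> obj FG"
    have xV: "x \<in> V" and yV: "y \<in> V" using x y objV by auto
    have cA: "continuous_map (homtop FG x y) (homtop FG v v) (\<lambda>g. \<Psi> (\<phi> g))"
      using continuous_map_compose[OF \<phi>cont[OF xV yV] \<Psi>c] by (simp add: o_def)
    have cx: "continuous_map (homtop FG x y) (homtop FG x v) (\<lambda>_. ginv FG (pth x))"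
      using ginv_Hom[OF FGtg vo x pth0[OF xV]] gtop[OF FGtg x vo] by simp
    have cy: "continuous_map (homtop FG x y) (homtop FG v y) (\<lambda>_. pth y)"
      using pth0[OF yV] gtop[OF FGtg vo y] by simp
    have c1: "continuous_map (homtop FG x y) (homtop FG x v) (\<lambda>g. comp FG (\<Psi> (\<phi> g)) (ginv FG (pth x)))"
      by (rule gcont_comp[OF FGtg x vo vo cx cA])
    have c2: "continuous_map (homtop FG x y) (homtop FG x y) (\<lambda>g. comp FG (pth y) (comp FG (\<Psi> (\<phi> g)) (ginv FG (pth x))))"
      by (rule gcont_comp[OF FGtg x vo y c1 cy])
    have "continuous_map (homtop FG x y) (homtop FG x y) K"
      using c2 by (rule continuous_map_eq) (use Keq[OF xV yV] gtop[OF FGtg x y] in simp)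
    then show "continuous_map (homtop FG x y) (homtop FG (id x) (id y)) K" by simp
  next
    fix x assume x: "x \<in> obj FG"
    have xV: "x \<in> V" using x objV by auto
    have "K (ident FG x) = comp FG (pth x) (comp FG (\<Psi> (\<phi> (ident FG x))) (ginv FG (pth x)))"
      using Keq[OF xV xV gid[OF FGtg x]] .
    also have "\<dots> = comp FG (pth x) (ginv FG (pth x))"
      using \<phi>id[OF xV] \<Psi>one glid[OF FGtg x vo ginv_Hom[OF FGtg vo x pth0[OF xV]]] by simp
    also have "\<dots> = ident FG x" using ginv_r[OF FGtg vo x pth0[OF xV]] .
    finally show "K (ident FG x) = ident FG (id x)" by simp
  next
    fix x y z f g assume x: "x \<in> obj FG" and y: "y \<in> obj FG" and z: "z \<in> obj FG"
      and f: "f \<in> Hom FG x y" and g: "g \<in> Hom FG y z"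
    have xV: "x \<in> V" and yV: "y \<in> V" and zV: "z \<in> V" using x y z objV by auto
    have gf: "comp FG g f \<in> Hom FG x z" using gcomp[OF FGtg x y z f g] .
    have "K (comp FG g f) = comp FG (pth z) (comp FG (\<Psi> (\<phi> (comp FG g f))) (ginv FG (pth x)))"
      using Keq[OF xV zV gf] .
    also have "\<Psi> (\<phi> (comp FG g f)) = comp FG (\<Psi> (\<phi> g)) (\<Psi> (\<phi> f))"
      using \<phi>comp[OF xV yV zV f g] \<Psi>mult[OF \<phi>car[OF yV zV g] \<phi>car[OF xV yV f]] by simp
    also have "comp FG (pth z) (comp FG (comp FG (\<Psi> (\<phi> g)) (\<Psi> (\<phi> f))) (ginv FG (pth x)))
        = comp FG (comp FG (pth z) (comp FG (\<Psi> (\<phi> g)) (ginv FG (pth y)))) (comp FG (pth y) (comp FG (\<Psi> (\<phi> f)) (ginv FG (pth x))))"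
      using conj_mult[OF FGtg vo x y z pth0[OF xV] pth0[OF yV] pth0[OF zV] \<Psi>\<phi>Hom[OF yV zV g] \<Psi>\<phi>Hom[OF xV yV f]] by simp
    also have "\<dots> = comp FG (K g) (K f)" using Keq[OF yV zV g] Keq[OF xV yV f] by simp
    finally show "K (comp FG g f) = comp FG (K g) (K f)" .
  qed
  have K\<sigma>: "\<forall>\<alpha>\<in>topspace E. K (\<sigma> \<alpha>) = \<sigma> \<alpha>"
  proof
    fix \<alpha> assume \<alpha>: "\<alpha> \<in> topspace E"
    have o: "d0 \<alpha> \<in> V" "d1 \<alpha> \<in> V" using \<alpha> d0E d1E by auto
    have zt: "collapse T \<alpha> \<in> topspace (graph_quotient E T)" using \<alpha> by (simp add: topspace_graph_quotient)
    have "K (\<sigma> \<alpha>) = comp FG (pth (d1 \<alpha>)) (comp FG (\<Psi> (\<sigma>s (collapse T \<alpha>))) (ginv FG (pth (d0 \<alpha>))))"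
      using Keq[OF o \<sigma>Hom[OF \<alpha>]] \<phi>\<sigma>[OF \<alpha>] by simp
    also have "\<dots> = comp FG (pth (d1 \<alpha>)) (comp FG (qq \<alpha>) (ginv FG (pth (d0 \<alpha>))))"
      using \<Psi>\<sigma>[OF zt] qcoll by simp
    also have "\<dots> = \<sigma> \<alpha>"
    proof (cases "\<alpha> \<in> T")
      case True
      show ?thesis using qqT[OF True] pthT[OF True]
          edge_T[OF FGtg vo xo[OF o(1)] xo[OF o(2)] pth0[OF o(1)] \<sigma>Hom[OF \<alpha>]] by simp
    next
      case False
      show ?thesis unfolding qq_def
        by (rule edge_nonT[OF FGtg vo xo[OF o(1)] xo[OF o(2)] pth0[OF o(1)] pth0[OF o(2)] \<sigma>Hom[OF \<alpha>]])
    qed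
    finally show "K (\<sigma> \<alpha>) = \<sigma> \<alpha>" .
  qed
  have idfun: "cont_functor FG FG id (\<lambda>g. g)"
    unfolding cont_functor_def by (simp add: continuous_map_id[unfolded id_def])
  have \<Psi>\<phi>: "\<forall>g\<in>Hom FG v v. \<Psi> (\<phi> g) = g"
  proof
    fix g assume g: "g \<in> Hom FG v v"
    have "K g = g"
      using univm[OF FGtg gm\<sigma>, rule_format, of K "\<lambda>g. g" v v g] Kfun K\<sigma> idfun v g by blast
    moreover have "K g = \<Psi> (\<phi> g)"
      using Keq[OF v v g] pthv conj_id[OF FGtg vo \<Psi>\<phi>Hom[OF v v g]] by simp
    ultimately show "\<Psi> (\<phi> g) = g" by simp
  qed
  have \<phi>hom: "\<phi> \<in> hom (vertex_group FG v) FGr"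
  proof (rule homI)
    show "\<phi> x \<in> carrier FGr" if "x \<in> carrier (vertex_group FG v)" for x
      using that \<phi>car[OF v v] by (simp add: vertex_group_def)
    show "\<phi> (x \<otimes>\<^bsub>vertex_group FG v\<^esub> y) = \<phi> x \<otimes>\<^bsub>FGr\<^esub> \<phi> y"
      if "x \<in> carrier (vertex_group FG v)" "y \<in> carrier (vertex_group FG v)" for x y
      using that \<phi>comp[OF v v v] by (simp add: vertex_group_def)
  qed
  have bij: "bij_betw \<phi> (carrier (vertex_group FG v)) (carrier FGr)"
  proof (rule bij_betw_byWitness[where f'=\<Psi>])
    show "\<forall>a\<in>carrier (vertex_group FG v). \<Psi> (\<phi> a) = a" using \<Psi>\<phi> by (simp add: vertex_group_def)
    show "\<forall>a'\<in>carrier FGr. \<phi> (\<Psi> a') = a'" using \<phi>\<Psi> .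
    show "\<phi> ` carrier (vertex_group FG v) \<subseteq> carrier FGr" using \<phi>car[OF v v] by (auto simp: vertex_group_def)
    show "\<Psi> ` carrier FGr \<subseteq> carrier (vertex_group FG v)" using \<Psi>car by (auto simp: vertex_group_def)
  qed
  have homeo: "homeomorphic_map (homtop FG v v) \<tau> \<phi>"
    unfolding homeomorphic_map_maps homeomorphic_maps_def
    using \<phi>cont[OF v v] \<Psi>c \<Psi>\<phi> \<phi>\<Psi> gtop[OF FGtg vo vo] tspF by auto
  show ?thesis unfolding top_group_isomorphic_def iso_def using \<phi>hom bij homeo by blast
qed


end
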